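(* Let $\omega>0$ and consider the saturated oscillator $\dot x=A_0x-B\,\mathrm{sat}(Kx)$ with $x\in\mathbb{R}^2$, $A_0=\begin{bmatrix}0&\omega\\-\omega&0\end{bmatrix}$, $B=\begin{bmatrix}0\\ \omega\end{bmatrix}$, $K=[k_1\ k_2]$. The origin is globally asymptotically stable if and only if $k_1>-1$ and $k_2>0$.
   Context: $\mathrm{sat}(s)=\min\{\overline{u},\max\{-\underline{u},s\}\}$ with $\overline{u},\underline{u}>0$. *)

theory Defs
  imports "HOL-Analysis.Analysis"
begin

definition sat :: "real \<Rightarrow> real \<Rightarrow> real \<Rightarrow> real" where
  "sat ubar ulow s = min ubar (max (- ulow) s)"

definition osc_field :: "real \<Rightarrow> real \<Rightarrow> real \<Rightarrow> real \<Rightarrow> real \<Rightarrow> real^2 \<Rightarrow> real^2" where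
  "osc_field \<omega> ubar ulow k1 k2 x =
     (let A0 = (vector [vector [0, \<omega>], vector [- \<omega>, 0]] :: real^2^2);
          B  = (vector [0, \<omega>] :: real^2);
          K  = (vector [k1, k2] :: real^2)
      in A0 *v x - sat ubar ulow (K \<bullet> x) *\<^sub>R B)"

definition is_solution :: "('a::real_normed_vector \<Rightarrow> 'a) \<Rightarrow> (real \<Rightarrow> 'a) \<Rightarrow> bool" where
  "is_solution f x \<longleftrightarrow> (\<forall>t\<ge>0. (x has_vector_derivative f (x t)) (at t within {0..}))"

definition GAS_origin :: "('a::real_normed_vector \<Rightarrow> 'a) \<Rightarrow> bool" where
  "GAS_origin f \<longleftrightarrow>
     f 0 = 0 \<and>
     (\<forall>\<epsilon>>0. \<exists>\<delta>>0. \<forall>x. is_solution f x \<longrightarrow> norm (x 0) < \<delta> \<longrightarrow> (\<forall>t\<ge>0. norm (x t) < \<epsilon>)) \<and>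
     (\<forall>x. is_solution f x \<longrightarrow> (x \<longlongrightarrow> 0) at_top)"

end

theory Submission
  imports Defs "HOL-Analysis.Analysis"
begin

fun pic :: "('a::banach \<Rightarrow> 'a) \<Rightarrow> 'a \<Rightarrow> nat \<Rightarrow> real \<Rightarrow> 'a" where
  "pic f x0 0 = (\<lambda>t. x0)"
| "pic f x0 (Suc n) = (\<lambda>t. x0 + integral {0..t} (\<lambda>s. f (pic f x0 n s)))"

lemma lip_cont:
  fixes f :: "'a::banach \<Rightarrow> 'a"
  assumes L: "\<And>a b. norm (f a - f b) \<le> L * norm (a - b)"
  shows "continuous_on S f"
proof -
  have "continuous_on UNIV f"
    unfolding continuous_on_iff
  proof (intro ballI allI impI)
    fix x and e :: real assume "e > 0"
    show "\<exists>d>0. \<forall>x'\<in>UNIV. dist x' x < d \<longrightarrow> dist (f x') (f x) < e"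
    proof (intro exI[of _ "e / (\<bar>L\<bar> + 1)"] conjI ballI impI)
      show "e / (\<bar>L\<bar> + 1) > 0" using \<open>e>0\<close> by auto
      fix y assume "dist y x < e / (\<bar>L\<bar> + 1)"
      then have "(\<bar>L\<bar> + 1) * dist y x < e"
        by (simp add: field_simps)
      moreover have "dist (f y) (f x) \<le> (\<bar>L\<bar> + 1) * dist y x"
      proof -
        have "dist (f y) (f x) \<le> L * dist y x" using L[of y x] by (simp add: dist_norm)
        also have "\<dots> \<le> (\<bar>L\<bar> + 1) * dist y x" by (rule mult_right_mono) auto
        finally show ?thesis .
      qed
      ultimately show "dist (f y) (f x) < e" by linarith
    qed
  qed
  then show ?thesis by (rule continuous_on_subset) auto
qed

lemma pic_cont:
  fixes f :: "'a::banach \<Rightarrow> 'a"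
  assumes fc: "continuous_on UNIV f"
  shows "continuous_on {0..T} (pic f x0 n)"
proof (induction n)
  case 0
  then show ?case by simp
next
  case (Suc n)
  have c: "continuous_on {0..T} (\<lambda>s. f (pic f x0 n s))"
    using Suc continuous_on_compose2[OF fc] by blast
  have "continuous (at t within {0..T}) (\<lambda>u. integral {0..u} (\<lambda>s. f (pic f x0 n s)))"
    if "t \<in> {0..T}" for t
    using integral_has_vector_derivative[OF c that] has_vector_derivative_continuous by blast
  then have "continuous_on {0..T} (\<lambda>u. integral {0..u} (\<lambda>s. f (pic f x0 n s)))"
    using continuous_on_eq_continuous_within by blast
  then show ?case by (simp add: continuous_on_add)
qed

lemma pic_est:
  fixes f :: "'a::banach \<Rightarrow> 'a"
  assumes L: "\<And>a b. norm (f a - f b) \<le> L * norm (a - b)" and L0: "L \<ge> 0"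
  shows "t \<ge> 0 \<Longrightarrow> norm (pic f x0 (Suc n) t - pic f x0 n t)
     \<le> norm (f x0) * L ^ n * t ^ Suc n / fact (Suc n)"
proof (induction n arbitrary: t)
  case 0
  then show ?case by simp
next
  case (Suc n)
  have fc: "continuous_on UNIV f" by (rule lip_cont[OF L])
  have i1: "(\<lambda>s. f (pic f x0 (Suc n) s)) integrable_on {0..t}"
    by (rule integrable_continuous_real, rule continuous_on_compose2[OF fc pic_cont[OF fc]]) auto
  have i0: "(\<lambda>s. f (pic f x0 n s)) integrable_on {0..t}"
    by (rule integrable_continuous_real, rule continuous_on_compose2[OF fc pic_cont[OF fc]]) auto
  have "pic f x0 (Suc (Suc n)) t - pic f x0 (Suc n) t
      = integral {0..t} (\<lambda>s. f (pic f x0 (Suc n) s) - f (pic f x0 n s))"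
    using integral_diff[OF i1 i0] by simp
  also have "norm \<dots> \<le> integral {0..t} (\<lambda>s. L * (norm (f x0) * L ^ n * s ^ Suc n / fact (Suc n)))"
  proof (rule integral_norm_bound_integral)
    show "(\<lambda>s. f (pic f x0 (Suc n) s) - f (pic f x0 n s)) integrable_on {0..t}"
      using i1 i0 by (rule integrable_diff)
    show "(\<lambda>s. L * (norm (f x0) * L ^ n * s ^ Suc n / fact (Suc n))) integrable_on {0..t}"
      by (rule integrable_continuous_real) (intro continuous_intros, auto)
    fix s assume s: "s \<in> {0..t}"
    have "norm (f (pic f x0 (Suc n) s) - f (pic f x0 n s)) \<le> L * norm (pic f x0 (Suc n) s - pic f x0 n s)"
      by (rule L)
    also have "\<dots> \<le> L * (norm (f x0) * L ^ n * s ^ Suc n / fact (Suc n))"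
      using Suc.IH[of s] s L0 by (intro mult_left_mono) auto
    finally show "norm (f (pic f x0 (Suc n) s) - f (pic f x0 n s)) \<le> L * (norm (f x0) * L ^ n * s ^ Suc n / fact (Suc n))" .
  qed
  also have "\<dots> = norm (f x0) * L ^ Suc n * t ^ Suc (Suc n) / fact (Suc (Suc n))"
  proof -
    define c where "c = norm (f x0) * L ^ Suc n / fact (Suc (Suc n))"
    have eq: "c * (real (Suc (Suc n)) * s ^ Suc n) = L * (norm (f x0) * L ^ n * s ^ Suc n / fact (Suc n))" for s :: real
    proof -
      have "fact (Suc (Suc n)) = (real (Suc (Suc n))) * (fact (Suc n) :: real)"
        by (rule fact_Suc)
      moreover have "fact (Suc n) > (0::real)" "real (Suc (Suc n)) > 0" by simp_all
      ultimately show ?thesis unfolding c_def by (simp add: field_simps del: fact_Suc of_nat_Suc)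
    qed
    have hi: "((\<lambda>s. L * (norm (f x0) * L ^ n * s ^ Suc n / fact (Suc n))) has_integral
       ((\<lambda>s. c * s ^ Suc (Suc n)) t - (\<lambda>s. c * s ^ Suc (Suc n)) 0)) {0..t}"
    proof (rule fundamental_theorem_of_calculus)
      show "0 \<le> t" using Suc.prems .
      fix s :: real
      have "((\<lambda>s. c * s ^ Suc (Suc n)) has_real_derivative c * (real (Suc (Suc n)) * s ^ Suc n)) (at s within {0..t})"
        by (intro derivative_eq_intros) auto
      then show "((\<lambda>s. c * s ^ Suc (Suc n)) has_vector_derivative
          L * (norm (f x0) * L ^ n * s ^ Suc n / fact (Suc n))) (at s within {0..t})"
        unfolding has_real_derivative_iff_has_vector_derivative[symmetric] eq .
    qed
    have "integral {0..t} (\<lambda>s. L * (norm (f x0) * L ^ n * s ^ Suc n / fact (Suc n))) = c * t ^ Suc (Suc n)"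
      using integral_unique[OF hi] by simp
    then show ?thesis unfolding c_def by simp
  qed
  finally show ?case .
qed

definition sol :: "('a::banach \<Rightarrow> 'a) \<Rightarrow> 'a \<Rightarrow> real \<Rightarrow> 'a" where
  "sol f x0 t = x0 + suminf (\<lambda>i. pic f x0 (Suc i) t - pic f x0 i t)"

lemma pic_unif:
  fixes f :: "'a::banach \<Rightarrow> 'a"
  assumes L: "\<And>a b. norm (f a - f b) \<le> L * norm (a - b)" and L0: "L \<ge> 0"
  shows "uniform_limit {0..T} (pic f x0) (sol f x0) sequentially"
proof -
  define M where "M i = norm (f x0) * L ^ i * T ^ Suc i / fact (Suc i)" for i
  have sm: "summable M"
  proof (rule summable_comparison_test)
    show "summable (\<lambda>i. (norm (f x0) * \<bar>T\<bar>) * (inverse (fact i) * (L * \<bar>T\<bar>) ^ i))"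
      by (rule summable_mult, rule summable_exp)
    show "\<exists>N. \<forall>n\<ge>N. norm (M n) \<le> (norm (f x0) * \<bar>T\<bar>) * (inverse (fact n) * (L * \<bar>T\<bar>) ^ n)"
    proof (intro exI allI impI)
      fix n :: nat
      have "norm (M n) = (norm (f x0) * \<bar>T\<bar>) * ((L * \<bar>T\<bar>) ^ n / fact (Suc n))"
        unfolding M_def using L0 by (simp add: abs_mult power_abs power_mult_distrib field_simps)
      also have "\<dots> \<le> (norm (f x0) * \<bar>T\<bar>) * ((L * \<bar>T\<bar>) ^ n / fact n)"
        by (intro mult_left_mono divide_left_mono) (auto simp: L0 fact_mono)
      finally show "norm (M n) \<le> (norm (f x0) * \<bar>T\<bar>) * (inverse (fact n) * (L * \<bar>T\<bar>) ^ n)"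
        by (simp add: field_simps)
    qed
  qed
  have "uniform_limit {0..T} (\<lambda>n t. \<Sum>i<n. pic f x0 (Suc i) t - pic f x0 i t)
      (\<lambda>t. suminf (\<lambda>i. pic f x0 (Suc i) t - pic f x0 i t)) sequentially"
  proof (rule Weierstrass_m_test[OF _ sm])
    fix n t assume t: "t \<in> {0..T}"
    have "norm (pic f x0 (Suc n) t - pic f x0 n t) \<le> norm (f x0) * L ^ n * t ^ Suc n / fact (Suc n)"
      using pic_est[OF L L0] t by auto
    also have "\<dots> \<le> M n" unfolding M_def using t L0
      by (intro divide_right_mono mult_left_mono power_mono) auto
    finally show "norm (pic f x0 (Suc n) t - pic f x0 n t) \<le> M n" .
  qed
  then have "uniform_limit {0..T} (\<lambda>n t. x0 + (\<Sum>i<n. pic f x0 (Suc i) t - pic f x0 i t))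
      (\<lambda>t. x0 + suminf (\<lambda>i. pic f x0 (Suc i) t - pic f x0 i t)) sequentially"
    by (intro uniform_limit_add uniform_limit_const)
  moreover have "(\<lambda>n t. x0 + (\<Sum>i<n. pic f x0 (Suc i) t - pic f x0 i t)) = pic f x0"
    by (rule ext, rule ext, subst sum_lessThan_telescope) simp
  ultimately show ?thesis unfolding sol_def[abs_def] by simp
qed

lemma sol_integral:
  fixes f :: "'a::banach \<Rightarrow> 'a"
  assumes L: "\<And>a b. norm (f a - f b) \<le> L * norm (a - b)" and L0: "L \<ge> 0" and t: "t \<ge> 0"
  shows "sol f x0 t = x0 + integral {0..t} (\<lambda>s. f (sol f x0 s))"
proof -
  have fc: "continuous_on UNIV f" by (rule lip_cont[OF L])
  have u: "uniform_limit {0..t} (pic f x0) (sol f x0) sequentially"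
    by (rule pic_unif[OF L L0])
  have uf: "uniform_limit {0..t} (\<lambda>n s. f (pic f x0 n s)) (\<lambda>s. f (sol f x0 s)) sequentially"
  proof (rule uniform_limitI)
    fix e :: real assume e: "e > 0"
    have "\<forall>\<^sub>F n in sequentially. \<forall>s\<in>{0..t}. dist (pic f x0 n s) (sol f x0 s) < e / (L + 1)"
      using uniform_limitD[OF u] e L0 by simp
    then show "\<forall>\<^sub>F n in sequentially. \<forall>s\<in>{0..t}. dist (f (pic f x0 n s)) (f (sol f x0 s)) < e"
    proof eventually_elim
      case (elim n)
      show ?case
      proof
        fix s assume s: "s \<in> {0..t}"
        have "dist (f (pic f x0 n s)) (f (sol f x0 s)) \<le> L * dist (pic f x0 n s) (sol f x0 s)"
          using L by (simp add: dist_norm)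
        also have "\<dots> \<le> (L + 1) * dist (pic f x0 n s) (sol f x0 s)"
          by (simp add: mult_right_mono)
        also have "\<dots> < (L + 1) * (e / (L + 1))"
          using elim s L0 by (intro mult_strict_left_mono) auto
        also have "\<dots> = e" using L0 by simp
        finally show "dist (f (pic f x0 n s)) (f (sol f x0 s)) < e" .
      qed
    qed
  qed
  obtain I J where I: "\<And>n. ((\<lambda>s. f (pic f x0 n s)) has_integral I n) {0..t}"
    and J: "((\<lambda>s. f (sol f x0 s)) has_integral J) {0..t}" and IJ: "I \<longlonglongrightarrow> J"
  proof -
    have "\<And>n. continuous_on {0..t} (\<lambda>s. f (pic f x0 n s))"
      using continuous_on_compose2[OF fc pic_cont[OF fc]] by blast
    then show ?thesis using uniform_limit_integral[OF uf] that trivial_limit_sequentially by metis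
  qed
  have "(\<lambda>n. pic f x0 (Suc n) t) \<longlonglongrightarrow> x0 + J"
  proof -
    have "(\<lambda>n. pic f x0 (Suc n) t) = (\<lambda>n. x0 + I n)"
      using I by (auto simp: integral_unique)
    then show ?thesis using IJ by (simp add: tendsto_add)
  qed
  moreover have "(\<lambda>n. pic f x0 (Suc n) t) \<longlonglongrightarrow> sol f x0 t"
    by (rule LIMSEQ_Suc[OF tendsto_uniform_limitI[OF u]]) (use t in auto)
  ultimately have "sol f x0 t = x0 + J" using LIMSEQ_unique by blast
  then show ?thesis using J by (simp add: integral_unique)
qed

lemma existence:
  fixes f :: "'a::banach \<Rightarrow> 'a"
  assumes L: "\<And>a b. norm (f a - f b) \<le> L * norm (a - b)" and L0: "L \<ge> 0"
  shows "is_solution f (sol f x0) \<and> sol f x0 0 = x0"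
proof
  have fc: "continuous_on UNIV f" by (rule lip_cont[OF L])
  show "sol f x0 0 = x0" using sol_integral[OF L L0, of 0] by simp
  show "is_solution f (sol f x0)"
    unfolding is_solution_def
  proof (intro allI impI)
    fix t :: real assume t: "t \<ge> 0"
    have sc: "continuous_on {0..t+1} (sol f x0)"
      by (rule uniform_limit_theorem[OF _ pic_unif[OF L L0]]) (auto intro!: always_eventually pic_cont[OF fc])
    have "((\<lambda>u. x0 + integral {0..u} (\<lambda>s. f (sol f x0 s))) has_vector_derivative f (sol f x0 t)) (at t within {0..t+1})"
      using integral_has_vector_derivative[OF continuous_on_compose2[OF fc sc], of t] t
      by (auto intro!: derivative_eq_intros)
    then have "(sol f x0 has_vector_derivative f (sol f x0 t)) (at t within {0..t+1})"
      by (rule has_vector_derivative_transform[rotated 2]) (use t sol_integral[OF L L0] in auto)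
    moreover have "at t within {0..t+1} = at t within {0..}"
      by (rule at_within_nhd[where S="{..<t+1}"]) auto
    ultimately show "(sol f x0 has_vector_derivative f (sol f x0 t)) (at t within {0..})" by simp
  qed
qed


lemma sat_mono: "a \<le> b \<Longrightarrow> sat ub ul a \<le> sat ub ul b"
  unfolding sat_def by linarith

lemma sat_lip: "\<bar>sat ub ul a - sat ub ul b\<bar> \<le> \<bar>a - b\<bar>"
  unfolding sat_def by linarith

lemma sat_zero: "ub > 0 \<Longrightarrow> ul > 0 \<Longrightarrow> sat ub ul 0 = 0"
  unfolding sat_def by simp

lemma sat_bound: "ub > 0 \<Longrightarrow> ul > 0 \<Longrightarrow> \<bar>sat ub ul a\<bar> \<le> max ub ul"
  unfolding sat_def by linarith

lemma osc1: "osc_field \<omega> ub ul k1 k2 x $ 1 = \<omega> * x $ 2"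
  unfolding osc_field_def Let_def
  by (simp add: matrix_vector_mult_def sum_2)

lemma osc2: "osc_field \<omega> ub ul k1 k2 x $ 2 = - \<omega> * x $ 1 - \<omega> * sat ub ul (k1 * x $ 1 + k2 * x $ 2)"
  unfolding osc_field_def Let_def
  by (simp add: matrix_vector_mult_def sum_2 inner_vec_def)

lemma vec2_eq: "(x :: real^2) = y \<longleftrightarrow> x $ 1 = y $ 1 \<and> x $ 2 = y $ 2"
  by (metis (mono_tags, opaque_lifting) exhaust_2 vec_eq_iff)

lemma norm2_le: "norm (x :: real^2) \<le> \<bar>x $ 1\<bar> + \<bar>x $ 2\<bar>"
  using norm_le_l1_cart[of x] by (simp add: sum_2)

lemma norm2_sq: "(norm (x :: real^2))\<^sup>2 = (x $ 1)\<^sup>2 + (x $ 2)\<^sup>2"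
  by (simp add: norm_vec_def L2_set_def sum_2)

lemma osc_lip:
  assumes "\<omega> > 0"
  shows "norm (osc_field \<omega> ub ul k1 k2 a - osc_field \<omega> ub ul k1 k2 b)
     \<le> (2 * \<omega> * (1 + \<bar>k1\<bar> + \<bar>k2\<bar>)) * norm (a - b)"
proof -
  let ?f = "osc_field \<omega> ub ul k1 k2"
  have c1: "\<bar>(a - b) $ 1\<bar> \<le> norm (a - b)" and c2: "\<bar>(a - b) $ 2\<bar> \<le> norm (a - b)"
    by (rule component_le_norm_cart)+
  have s: "\<bar>sat ub ul (k1 * a $ 1 + k2 * a $ 2) - sat ub ul (k1 * b $ 1 + k2 * b $ 2)\<bar>
     \<le> \<bar>k1\<bar> * \<bar>(a - b) $ 1\<bar> + \<bar>k2\<bar> * \<bar>(a - b) $ 2\<bar>"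
  proof -
    have "\<bar>(k1 * a $ 1 + k2 * a $ 2) - (k1 * b $ 1 + k2 * b $ 2)\<bar> = \<bar>k1 * (a - b) $ 1 + k2 * (a - b) $ 2\<bar>"
      by (simp add: algebra_simps)
    also have "\<dots> \<le> \<bar>k1\<bar> * \<bar>(a - b) $ 1\<bar> + \<bar>k2\<bar> * \<bar>(a - b) $ 2\<bar>"
      by (metis abs_mult abs_triangle_ineq)
    finally show ?thesis using sat_lip order_trans by blast
  qed
  have e1: "\<bar>(?f a - ?f b) $ 1\<bar> \<le> \<omega> * norm (a - b)"
    using c2 assms by (simp add: osc1 abs_mult right_diff_distrib[symmetric])
  have e2: "\<bar>(?f a - ?f b) $ 2\<bar> \<le> \<omega> * (1 + \<bar>k1\<bar> + \<bar>k2\<bar>) * norm (a - b)"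
  proof -
    have "(?f a - ?f b) $ 2 = - \<omega> * ((a - b) $ 1) - \<omega> * (sat ub ul (k1 * a $ 1 + k2 * a $ 2) - sat ub ul (k1 * b $ 1 + k2 * b $ 2))"
      by (simp add: osc2 algebra_simps)
    also have "\<bar>\<dots>\<bar> \<le> \<omega> * \<bar>(a - b) $ 1\<bar> + \<omega> * (\<bar>k1\<bar> * \<bar>(a - b) $ 1\<bar> + \<bar>k2\<bar> * \<bar>(a - b) $ 2\<bar>)"
    proof -
      have "\<bar>- \<omega> * ((a - b) $ 1) - \<omega> * (sat ub ul (k1 * a $ 1 + k2 * a $ 2) - sat ub ul (k1 * b $ 1 + k2 * b $ 2))\<bar>
        \<le> \<omega> * \<bar>(a - b) $ 1\<bar> + \<omega> * \<bar>sat ub ul (k1 * a $ 1 + k2 * a $ 2) - sat ub ul (k1 * b $ 1 + k2 * b $ 2)\<bar>"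
      proof -
        have "\<bar>- \<omega> * ((a - b) $ 1) - \<omega> * (sat ub ul (k1 * a $ 1 + k2 * a $ 2) - sat ub ul (k1 * b $ 1 + k2 * b $ 2))\<bar>
          \<le> \<bar>- \<omega> * ((a - b) $ 1)\<bar> + \<bar>\<omega> * (sat ub ul (k1 * a $ 1 + k2 * a $ 2) - sat ub ul (k1 * b $ 1 + k2 * b $ 2))\<bar>"
          by (rule abs_triangle_ineq4)
        then show ?thesis using assms by (simp add: abs_mult)
      qed
      also have "\<dots> \<le> \<omega> * \<bar>(a - b) $ 1\<bar> + \<omega> * (\<bar>k1\<bar> * \<bar>(a - b) $ 1\<bar> + \<bar>k2\<bar> * \<bar>(a - b) $ 2\<bar>)"
        using s assms by (intro add_left_mono mult_left_mono) auto
      finally show ?thesis .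
    qed
    also have "\<dots> \<le> \<omega> * norm (a - b) + \<omega> * (\<bar>k1\<bar> * norm (a - b) + \<bar>k2\<bar> * norm (a - b))"
      using c1 c2 assms by (intro add_mono mult_left_mono) auto
    finally show ?thesis by (simp add: algebra_simps)
  qed
  have "norm (?f a - ?f b) \<le> \<bar>(?f a - ?f b) $ 1\<bar> + \<bar>(?f a - ?f b) $ 2\<bar>" by (rule norm2_le)
  also have "\<dots> \<le> \<omega> * norm (a - b) + \<omega> * (1 + \<bar>k1\<bar> + \<bar>k2\<bar>) * norm (a - b)"
    using e1 e2 by linarith
  also have "\<dots> \<le> (2 * \<omega> * (1 + \<bar>k1\<bar> + \<bar>k2\<bar>)) * norm (a - b)"
    using assms by (simp add: algebra_simps mult_right_mono)
  finally show ?thesis .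
qed


lemma maxsq_deriv: "((\<lambda>z::real. (max z 0)\<^sup>2) has_real_derivative 2 * max z 0) (at z)"
proof -
  consider "z > 0" | "z < 0" | "z = 0" by linarith
  then show ?thesis
  proof cases
    case 1
    have "((\<lambda>z::real. z\<^sup>2) has_real_derivative 2 * max z 0) (at z)"
      using 1 by (auto intro!: derivative_eq_intros)
    then show ?thesis
      by (rule has_field_derivative_transform_within_open[where S="{0<..}"]) (use 1 in auto)
  next
    case 2
    have "((\<lambda>z::real. 0) has_real_derivative 2 * max z 0) (at z)"
      using 2 by (auto intro!: derivative_eq_intros)
    then show ?thesis
      by (rule has_field_derivative_transform_within_open[where S="{..<0}"]) (use 2 in auto)
  next
    case 3
    have "((\<lambda>h::real. (max h 0)\<^sup>2 / h) \<longlongrightarrow> 0) (at 0)"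
    proof (rule Lim_null_comparison)
      show "\<forall>\<^sub>F h in at 0. norm ((max h 0)\<^sup>2 / h) \<le> \<bar>h\<bar>"
        by (intro always_eventually allI) (auto simp: max_def power2_eq_square)
      show "((\<lambda>h::real. \<bar>h\<bar>) \<longlongrightarrow> 0) (at 0)"
        by (rule tendsto_eq_intros refl)+ simp
    qed
    then show ?thesis unfolding 3 DERIV_def by simp
  qed
qed

definition Hs :: "real \<Rightarrow> real \<Rightarrow> real \<Rightarrow> real" where
  "Hs ub ul y = y\<^sup>2 / 2 - (max (y - ub) 0)\<^sup>2 / 2 - (max (- ul - y) 0)\<^sup>2 / 2"

definition Phi :: "real \<Rightarrow> real \<Rightarrow> real \<Rightarrow> real \<Rightarrow> real" where
  "Phi ub ul k1 s = s\<^sup>2 / 2 + Hs ub ul (k1 * s) / k1"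

definition gfun :: "real \<Rightarrow> real \<Rightarrow> real \<Rightarrow> real \<Rightarrow> real" where
  "gfun ub ul k1 s = s + sat ub ul (k1 * s)"

lemma Hs_deriv:
  assumes "ub > 0" "ul > 0"
  shows "(Hs ub ul has_real_derivative sat ub ul y) (at y)"
proof -
  have d1: "((\<lambda>y. (max (y - ub) 0)\<^sup>2) has_real_derivative 2 * max (y - ub) 0 * 1) (at y)"
    by (rule DERIV_chain2[OF maxsq_deriv]) (auto intro!: derivative_eq_intros)
  have d2: "((\<lambda>y. (max (- ul - y) 0)\<^sup>2) has_real_derivative 2 * max (- ul - y) 0 * (- 1)) (at y)"
    by (rule DERIV_chain2[OF maxsq_deriv]) (auto intro!: derivative_eq_intros)
  have d0: "((\<lambda>y. y\<^sup>2) has_real_derivative 2 * y) (at y)"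
    by (auto intro!: derivative_eq_intros)
  have "(Hs ub ul has_real_derivative
      2 * y / 2 - 2 * max (y - ub) 0 * 1 / 2 - 2 * max (- ul - y) 0 * (- 1) / 2) (at y)"
    unfolding Hs_def[abs_def]
    by (intro DERIV_diff DERIV_cdivide d0 d1 d2)
  moreover have "2 * y / 2 - 2 * max (y - ub) 0 * 1 / 2 - 2 * max (- ul - y) 0 * (- 1) / 2 = sat ub ul y"
    using assms unfolding sat_def by (simp add: max_def min_def)
  ultimately show ?thesis by simp
qed

lemma Phi_deriv:
  assumes "ub > 0" "ul > 0"
  shows "(Phi ub ul k1 has_real_derivative gfun ub ul k1 s) (at s)"
proof (cases "k1 = 0")
  case True
  have "((\<lambda>s. s\<^sup>2 / 2) has_real_derivative s) (at s)"
    by (auto intro!: derivative_eq_intros)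
  moreover have "Phi ub ul k1 = (\<lambda>s. s\<^sup>2 / 2)" unfolding Phi_def[abs_def] True by simp
  ultimately show ?thesis using True assms by (simp add: gfun_def sat_zero)
next
  case False
  have "((\<lambda>s. Hs ub ul (k1 * s)) has_real_derivative sat ub ul (k1 * s) * k1) (at s)"
    by (rule DERIV_chain2[OF Hs_deriv[OF assms]]) (auto intro!: derivative_eq_intros)
  then have "((\<lambda>s. s\<^sup>2 / 2 + Hs ub ul (k1 * s) / k1) has_real_derivative 2 * s / 2 + sat ub ul (k1 * s) * k1 / k1) (at s)"
    by (intro derivative_intros) (auto intro!: derivative_eq_intros)
  then show ?thesis using False by (simp add: Phi_def[abs_def] gfun_def)
qed

lemma Phi0: "ub > 0 \<Longrightarrow> ul > 0 \<Longrightarrow> Phi ub ul k1 0 = 0"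
  by (simp add: Phi_def Hs_def)

lemma g_lower_pos:
  assumes "ub > 0" "ul > 0" "k1 > -1" "s \<ge> 0"
  shows "gfun ub ul k1 s \<ge> min 1 (1 + k1) * s"
proof (cases "k1 \<ge> 0")
  case True
  have ks: "k1 * s \<ge> 0" using True assms by simp
  have "sat ub ul (k1 * s) \<ge> 0" using assms ks unfolding sat_def by (simp add: le_max_iff_disj)
  moreover have "min 1 (1 + k1) * s \<le> s" using assms mult_right_mono[of "min 1 (1 + k1)" 1 s] by simp
  ultimately show ?thesis unfolding gfun_def by linarith
next
  case False
  moreover have "k1 * s \<le> 0" using False assms by (simp add: mult_nonpos_nonneg)
  ultimately have "sat ub ul (k1 * s) \<ge> k1 * s" using assms unfolding sat_def
    by (auto simp: min_def max_def)
  moreover have "min 1 (1 + k1) * s = (1 + k1) * s" using False by (simp add: min_def)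
  ultimately show ?thesis unfolding gfun_def by (simp add: algebra_simps)
qed

lemma g_lower_neg:
  assumes "ub > 0" "ul > 0" "k1 > -1" "s \<le> 0"
  shows "gfun ub ul k1 s \<le> min 1 (1 + k1) * s"
proof (cases "k1 \<ge> 0")
  case True
  then have "sat ub ul (k1 * s) \<le> 0" using assms mult_nonneg_nonpos[of k1 s] unfolding sat_def
    by auto
  moreover have "min 1 (1 + k1) * s \<ge> s" using assms True
    by (metis min.cobounded1 mult_le_cancel_right1 not_le)
  ultimately show ?thesis unfolding gfun_def by linarith
next
  case False
  moreover have "k1 * s \<ge> 0" using False assms by (simp add: mult_nonpos_nonpos)
  ultimately have "sat ub ul (k1 * s) \<le> k1 * s" using assms unfolding sat_def
    by (auto simp: min_def max_def)
  moreover have "min 1 (1 + k1) * s = (1 + k1) * s" using False by (simp add: min_def)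
  ultimately show ?thesis unfolding gfun_def by (simp add: algebra_simps)
qed

lemma g_upper:
  assumes "ub > 0" "ul > 0"
  shows "\<bar>gfun ub ul k1 s\<bar> \<le> (1 + \<bar>k1\<bar>) * \<bar>s\<bar>"
proof -
  have "\<bar>sat ub ul (k1 * s)\<bar> \<le> \<bar>k1 * s\<bar>"
    using sat_lip[of ub ul "k1 * s" 0] sat_zero[OF assms] by simp
  then show ?thesis unfolding gfun_def by (simp add: abs_mult algebra_simps)
qed

lemma sign_deriv_nonneg:
  fixes F F' :: "real \<Rightarrow> real"
  assumes F0: "F 0 = 0" and d: "\<And>s. (F has_real_derivative F' s) (at s)"
    and p: "\<And>s. s > 0 \<Longrightarrow> F' s \<ge> 0" and n: "\<And>s. s < 0 \<Longrightarrow> F' s \<le> 0"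
  shows "F s \<ge> 0"
proof -
  have c: "continuous_on A F" for A
    using d by (meson DERIV_continuous continuous_at_imp_continuous_on)
  have dif: "F differentiable (at x)" for x
    using d real_differentiable_def by blast
  consider "s > 0" | "s < 0" | "s = 0" by linarith
  then show ?thesis
  proof cases
    case 1
    obtain l z where "0 < z" "z < s" "DERIV F z :> l" "F s - F 0 = (s - 0) * l"
      using MVT[OF 1 c dif] by blast
    then have "l = F' z" using d DERIV_unique by blast
    then show ?thesis using \<open>0 < z\<close> \<open>F s - F 0 = (s - 0) * l\<close> p[of z] 1 F0 by simp
  next
    case 2
    obtain l z where "s < z" "z < 0" "DERIV F z :> l" "F 0 - F s = (0 - s) * l"
      using MVT[OF 2 c dif] by blast
    then have "l = F' z" using d DERIV_unique by blast
    then have "F 0 - F s = (0 - s) * F' z" using \<open>F 0 - F s = (0 - s) * l\<close> by simp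
    moreover have "(0 - s) * F' z \<le> 0" using n[OF \<open>z < 0\<close>] 2 by (simp add: mult_nonpos_nonpos)
    ultimately show ?thesis using F0 by simp
  next
    case 3
    then show ?thesis using F0 by simp
  qed
qed

lemma Phi_lower:
  assumes "ub > 0" "ul > 0" "k1 > -1"
  shows "Phi ub ul k1 s \<ge> min 1 (1 + k1) * s\<^sup>2 / 2"
proof -
  have "Phi ub ul k1 s - min 1 (1 + k1) * s\<^sup>2 / 2 \<ge> 0"
  proof (rule sign_deriv_nonneg[where F = "\<lambda>s. Phi ub ul k1 s - min 1 (1 + k1) * s\<^sup>2 / 2" and F' = "\<lambda>s. gfun ub ul k1 s - min 1 (1 + k1) * s"])
    show "Phi ub ul k1 0 - min 1 (1 + k1) * 0\<^sup>2 / 2 = 0" by (simp add: Phi0 assms)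
    fix s
    have B: "((\<lambda>s. min 1 (1 + k1) * s\<^sup>2 / 2) has_real_derivative min 1 (1 + k1) * s) (at s)"
      by (auto intro!: derivative_eq_intros)
    show "((\<lambda>s. Phi ub ul k1 s - min 1 (1 + k1) * s\<^sup>2 / 2) has_real_derivative gfun ub ul k1 s - min 1 (1 + k1) * s) (at s)"
      by (rule DERIV_diff[OF Phi_deriv[OF assms(1,2)] B])
    show "s > 0 \<Longrightarrow> gfun ub ul k1 s - min 1 (1 + k1) * s \<ge> 0" using g_lower_pos[OF assms, of s] by simp
    show "s < 0 \<Longrightarrow> gfun ub ul k1 s - min 1 (1 + k1) * s \<le> 0" using g_lower_neg[OF assms, of s] by simp
  qed
  then show ?thesis by simp
qed

lemma Phi_upper:
  assumes "ub > 0" "ul > 0"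
  shows "Phi ub ul k1 s \<le> (1 + \<bar>k1\<bar>) * s\<^sup>2 / 2"
proof -
  have "(1 + \<bar>k1\<bar>) * s\<^sup>2 / 2 - Phi ub ul k1 s \<ge> 0"
  proof (rule sign_deriv_nonneg[where F = "\<lambda>s. (1 + \<bar>k1\<bar>) * s\<^sup>2 / 2 - Phi ub ul k1 s" and F' = "\<lambda>s. (1 + \<bar>k1\<bar>) * s - gfun ub ul k1 s"])
    show "(1 + \<bar>k1\<bar>) * 0\<^sup>2 / 2 - Phi ub ul k1 0 = 0" by (simp add: Phi0 assms)
    fix s
    have B: "((\<lambda>s. (1 + \<bar>k1\<bar>) * s\<^sup>2 / 2) has_real_derivative (1 + \<bar>k1\<bar>) * s) (at s)"
      by (auto intro!: derivative_eq_intros)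
    show "((\<lambda>s. (1 + \<bar>k1\<bar>) * s\<^sup>2 / 2 - Phi ub ul k1 s) has_real_derivative (1 + \<bar>k1\<bar>) * s - gfun ub ul k1 s) (at s)"
      by (rule DERIV_diff[OF B Phi_deriv[OF assms(1,2)]])
    show "s > 0 \<Longrightarrow> (1 + \<bar>k1\<bar>) * s - gfun ub ul k1 s \<ge> 0" using g_upper[OF assms, of k1 s] by simp
    show "s < 0 \<Longrightarrow> (1 + \<bar>k1\<bar>) * s - gfun ub ul k1 s \<le> 0" using g_upper[OF assms, of k1 s] by simp
  qed
  then show ?thesis by simp
qed


lemma at_within_nonneg: "t > 0 \<Longrightarrow> at t within {0::real..} = at t"
  by (rule at_within_nhd[where S="{0<..}"]) auto

lemma deriv_cont_on:
  assumes d: "\<forall>t\<ge>0. (h has_real_derivative h' t) (at t within {0..})"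
  shows "continuous_on {0..} h"
  unfolding continuous_on_eq_continuous_within
  using d DERIV_continuous by (metis atLeast_iff)

lemma mvt_within:
  fixes h h' :: "real \<Rightarrow> real"
  assumes d: "\<forall>t\<ge>0. (h has_real_derivative h' t) (at t within {0..})"
    and a: "0 \<le> a" and ab: "a < b"
  shows "\<exists>z. a < z \<and> z < b \<and> h b - h a = (b - a) * h' z"
proof -
  have c: "continuous_on {a..b} h"
    using deriv_cont_on[OF d] by (rule continuous_on_subset) (use a in auto)
  have dd: "(h has_real_derivative h' x) (at x)" if "a < x" for x
    using d[rule_format, of x] that a at_within_nonneg[of x] by auto
  have dif: "h differentiable (at x)" if "a < x" "x < b" for x
    using dd[OF that(1)] real_differentiable_def by blast
  obtain l z where "a < z" "z < b" "DERIV h z :> l" "h b - h a = (b - a) * l"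
    using MVT[OF ab c dif] by blast
  moreover have "l = h' z" using DERIV_unique[OF \<open>DERIV h z :> l\<close> dd[OF \<open>a < z\<close>]] .
  ultimately show ?thesis by blast
qed

lemma mvt_within_le:
  fixes h h' :: "real \<Rightarrow> real"
  assumes d: "\<forall>t\<ge>0. (h has_real_derivative h' t) (at t within {0..})"
    and a: "0 \<le> a" and ab: "a \<le> b"
  shows "\<exists>z. a \<le> z \<and> z \<le> b \<and> h b - h a = (b - a) * h' z"
proof (cases "a = b")
  case True then show ?thesis by auto
next
  case False
  then have "a < b" using ab by simp
  then obtain z where "a < z" "z < b" "h b - h a = (b - a) * h' z" using mvt_within[OF d a] by blast
  then show ?thesis by (intro exI[of _ z]) auto
qed

lemma barbalat:
  fixes h h' :: "real \<Rightarrow> real"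
  assumes d: "\<forall>t\<ge>0. (h has_real_derivative h' t) (at t within {0..})"
    and lip: "\<And>s t. 0 \<le> s \<Longrightarrow> 0 \<le> t \<Longrightarrow> \<bar>h' s - h' t\<bar> \<le> C * \<bar>s - t\<bar>"
    and C: "C \<ge> 0"
    and cau: "\<And>e. e > 0 \<Longrightarrow> \<exists>T. \<forall>s\<ge>T. \<forall>t\<ge>T. \<bar>h s - h t\<bar> < e"
    and e: "e > 0"
  shows "\<exists>T. \<forall>t\<ge>T. \<bar>h' t\<bar> < e"
proof -
  define \<delta> where "\<delta> = e / (2 * (C + 1))"
  have \<delta>: "\<delta> > 0" "C * \<delta> \<le> e / 2"
    using e C by (auto simp: \<delta>_def field_simps)
  obtain T where T: "\<forall>s\<ge>T. \<forall>t\<ge>T. \<bar>h s - h t\<bar> < e * \<delta> / 2"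
    using cau[of "e * \<delta> / 2"] e \<delta> by auto
  show ?thesis
  proof (intro exI[of _ "max T 0"] allI impI)
    fix t assume t: "max T 0 \<le> t"
    show "\<bar>h' t\<bar> < e"
    proof (rule ccontr)
      assume ht: "\<not> \<bar>h' t\<bar> < e"
      obtain z where z: "t < z" "z < t + \<delta>" "h (t + \<delta>) - h t = (t + \<delta> - t) * h' z"
        using mvt_within[OF d, of t "t + \<delta>"] t \<delta> by auto
      have "\<bar>h' z - h' t\<bar> \<le> C * \<bar>z - t\<bar>" using lip[of z t] t z by auto
      also have "\<dots> \<le> C * \<delta>" using z C by (intro mult_left_mono) auto
      finally have "\<bar>h' z\<bar> \<ge> e / 2" using ht \<delta> by linarith
      then have "\<bar>h (t + \<delta>) - h t\<bar> \<ge> \<delta> * (e / 2)"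
        using z(3) \<delta> by (simp add: abs_mult mult_left_mono)
      moreover have "\<bar>h (t + \<delta>) - h t\<bar> < e * \<delta> / 2"
        using T t \<delta> by auto
      ultimately show False by (simp add: field_simps)
    qed
  qed
qed

lemma escape_fwd:
  fixes y y' :: "real \<Rightarrow> real"
  assumes d: "\<forall>t\<ge>0. (y has_real_derivative y' t) (at t within {0..})"
    and yc: "continuous_on {0..} y'"
    and bnd: "\<forall>t\<ge>0. \<bar>y t\<bar> \<le> B"
    and T0: "T0 \<ge> 0" and \<beta>: "\<beta> > 0" and \<mu>: "\<mu> > 0"
    and key: "\<forall>t\<ge>T0. \<bar>y t\<bar> \<ge> \<beta> \<longrightarrow> \<bar>y' t\<bar> \<ge> \<mu>"
    and t: "t \<ge> T0" and yt: "y t \<ge> \<beta>" and y't: "y' t > 0"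
  shows False
proof -
  have pos: "y' s > 0" if s: "s \<ge> t" for s
  proof (rule ccontr)
    assume "\<not> y' s > 0"
    then have ys: "y' s \<le> 0" by simp
    define K where "K = {t..s} \<inter> y' -` {..0}"
    have Kc: "closed K" unfolding K_def
      by (rule continuous_closed_preimage) (use yc T0 t in \<open>auto intro: continuous_on_subset\<close>)
    have sK: "s \<in> K" using ys s unfolding K_def by auto
    define r0 where "r0 = Inf K"
    have r0K: "r0 \<in> K" unfolding r0_def
      by (rule closed_contains_Inf) (use sK Kc in \<open>auto simp: K_def bdd_below_def\<close>)
    then have r0: "t \<le> r0" "r0 \<le> s" "y' r0 \<le> 0" unfolding K_def by auto
    have before: "y' q > 0" if "t \<le> q" "q < r0" for q
    proof (rule ccontr)
      assume "\<not> y' q > 0"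
      then have "q \<in> K" using that r0 unfolding K_def by auto
      then have "r0 \<le> q" unfolding r0_def by (rule cInf_lower) (auto simp: K_def bdd_below_def)
      then show False using that by simp
    qed
    have tr0: "t < r0" using r0 y't by (cases "t = r0") auto
    obtain z where z: "t < z" "z < r0" "y r0 - y t = (r0 - t) * y' z"
      using mvt_within[OF d _ tr0] T0 t by auto
    have "y' z > 0" using before z by auto
    then have "(r0 - t) * y' z \<ge> 0" using z by simp
    then have "y r0 \<ge> y t" using z by linarith
    then have "\<bar>y r0\<bar> \<ge> \<beta>" using yt by linarith
    moreover have "T0 \<le> r0" using r0 t by linarith
    ultimately have "\<bar>y' r0\<bar> \<ge> \<mu>" using key by blast
    then have "y' r0 \<le> - \<mu>" using r0 by linarith
    moreover have "continuous_on {t..r0} y'" using yc by (rule continuous_on_subset) (use T0 t in auto)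
    ultimately obtain q where q: "t \<le> q" "q \<le> r0" "y' q = - \<mu> / 2"
      using IVT2'[of y' r0 "- \<mu> / 2" t] tr0 y't \<mu> by auto
    then have "q < r0" using \<open>y' r0 \<le> - \<mu>\<close> \<mu> by (cases "q = r0") auto
    then have "y' q > 0" using before[OF q(1)] by simp
    then show False using q \<mu> by simp
  qed
  define s where "s = t + 2 * \<bar>B\<bar> / \<mu> + 1"
  have ts: "t < s" using \<mu> unfolding s_def by (simp add: field_simps)
  obtain z where z: "t < z" "z < s" "y s - y t = (s - t) * y' z"
    using mvt_within[OF d _ ts] T0 t by auto
  have "y z \<ge> y t"
  proof -
    obtain w where "t < w" "w < z" "y z - y t = (z - t) * y' w"
      using mvt_within[OF d _ z(1)] T0 t by auto
    moreover have "y' w > 0" using pos \<open>t < w\<close> by simp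
    ultimately have "(z - t) * y' w \<ge> 0" "y z - y t = (z - t) * y' w" by simp_all
    then show ?thesis by linarith
  qed
  then have "\<bar>y' z\<bar> \<ge> \<mu>" using key yt z t by auto
  then have "y' z \<ge> \<mu>" using pos[of z] z by simp
  then have "y s - y t \<ge> (s - t) * \<mu>" using z ts by (simp add: mult_left_mono)
  also have "(s - t) * \<mu> = 2 * \<bar>B\<bar> + \<mu>" using \<mu> unfolding s_def by (simp add: field_simps)
  finally have "y s - y t \<ge> 2 * \<bar>B\<bar> + \<mu>" .
  moreover have "\<bar>y s\<bar> \<le> B" "\<bar>y t\<bar> \<le> B" using bnd T0 t ts by auto
  ultimately show False using \<mu> by linarith
qed

lemma escape_bwd:
  fixes y y' :: "real \<Rightarrow> real"
  assumes d: "\<forall>t\<ge>0. (y has_real_derivative y' t) (at t within {0..})"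
    and yc: "continuous_on {0..} y'"
    and bnd: "\<forall>t\<ge>0. \<bar>y t\<bar> \<le> B"
    and T0: "T0 \<ge> 0" and \<beta>: "\<beta> > 0" and \<mu>: "\<mu> > 0"
    and key: "\<forall>t\<ge>T0. \<bar>y t\<bar> \<ge> \<beta> \<longrightarrow> \<bar>y' t\<bar> \<ge> \<mu>"
    and t: "t \<ge> T0 + 2 * \<bar>B\<bar> / \<mu> + 1" and yt: "y t \<ge> \<beta>" and y't: "y' t < 0"
  shows False
proof -
  have "2 * \<bar>B\<bar> / \<mu> \<ge> 0" using \<mu> by simp
  then have tT0: "T0 < t" using t by linarith
  have neg: "y' r < 0" if r: "T0 \<le> r" "r \<le> t" for r
  proof (rule ccontr)
    assume "\<not> y' r < 0"
    then have yr: "y' r \<ge> 0" by simp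
    define K where "K = {r..t} \<inter> y' -` {0..}"
    have Kc: "closed K" unfolding K_def
      by (rule continuous_closed_preimage) (use yc T0 r in \<open>auto intro: continuous_on_subset\<close>)
    have rK: "r \<in> K" using yr r unfolding K_def by auto
    define r0 where "r0 = Sup K"
    have r0K: "r0 \<in> K" unfolding r0_def
      by (rule closed_contains_Sup) (use rK Kc in \<open>auto simp: K_def bdd_above_def\<close>)
    then have r0: "r \<le> r0" "r0 \<le> t" "y' r0 \<ge> 0" unfolding K_def by auto
    have after: "y' q < 0" if "r0 < q" "q \<le> t" for q
    proof (rule ccontr)
      assume "\<not> y' q < 0"
      then have "q \<in> K" using that r0 unfolding K_def by auto
      then have "q \<le> r0" unfolding r0_def by (rule cSup_upper) (auto simp: K_def bdd_above_def)
      then show False using that by simp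
    qed
    have r0t: "r0 < t" using r0 y't by (cases "t = r0") auto
    obtain z where z: "r0 < z" "z < t" "y t - y r0 = (t - r0) * y' z"
      using mvt_within[OF d _ r0t] T0 r r0 by auto
    have "y' z < 0" using after z by auto
    then have "(t - r0) * y' z \<le> 0" using z by (simp add: mult_nonneg_nonpos)
    then have "y r0 \<ge> y t" using z by linarith
    then have "\<bar>y r0\<bar> \<ge> \<beta>" using yt by linarith
    moreover have "T0 \<le> r0" using r0 r by linarith
    ultimately have "\<bar>y' r0\<bar> \<ge> \<mu>" using key by blast
    then have "y' r0 \<ge> \<mu>" using r0 by linarith
    moreover have "continuous_on {r0..t} y'" using yc by (rule continuous_on_subset) (use T0 r r0 in auto)
    ultimately obtain q where q: "r0 \<le> q" "q \<le> t" "y' q = \<mu> / 2"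
      using IVT2'[of y' t "\<mu> / 2" r0] r0t y't \<mu> by auto
    then have "r0 < q" using \<open>y' r0 \<ge> \<mu>\<close> \<mu> by (cases "q = r0") auto
    then have "y' q < 0" using after q by auto
    then show False using q \<mu> by simp
  qed
  obtain z where z: "T0 < z" "z < t" "y t - y T0 = (t - T0) * y' z"
    using mvt_within[OF d T0 tT0] by auto
  have "y z \<ge> y t"
  proof -
    obtain w where "z < w" "w < t" "y t - y z = (t - z) * y' w"
      using mvt_within[OF d _ z(2)] T0 z by auto
    moreover have "y' w < 0" using neg \<open>z < w\<close> \<open>w < t\<close> z by simp
    ultimately have "(t - z) * y' w \<le> 0" "y t - y z = (t - z) * y' w" by (simp_all add: mult_nonneg_nonpos)
    then show ?thesis by linarith
  qed
  then have "\<bar>y' z\<bar> \<ge> \<mu>" using key yt z by auto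
  then have "y' z \<le> - \<mu>" using neg[of z] z by simp
  then have "(t - T0) * y' z \<le> (t - T0) * (- \<mu>)" using tT0 by (intro mult_left_mono) auto
  then have "y T0 - y t \<ge> (t - T0) * \<mu>" using z by simp
  moreover have "(t - T0) * \<mu> \<ge> 2 * \<bar>B\<bar> + \<mu>"
  proof -
    have "(t - T0) * \<mu> \<ge> (2 * \<bar>B\<bar> / \<mu> + 1) * \<mu>" using t \<mu> by (intro mult_right_mono) auto
    moreover have "(2 * \<bar>B\<bar> / \<mu> + 1) * \<mu> = 2 * \<bar>B\<bar> + \<mu>" using \<mu> by (simp add: distrib_right)
    ultimately show ?thesis by simp
  qed
  moreover have "\<bar>y T0\<bar> \<le> B" "\<bar>y t\<bar> \<le> B" using bnd T0 tT0 by auto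
  ultimately show False using \<mu> by linarith
qed

lemma escape:
  fixes y y' :: "real \<Rightarrow> real"
  assumes d: "\<forall>t\<ge>0. (y has_real_derivative y' t) (at t within {0..})"
    and yc: "continuous_on {0..} y'"
    and bnd: "\<forall>t\<ge>0. \<bar>y t\<bar> \<le> B"
    and T0: "T0 \<ge> 0" and \<beta>: "\<beta> > 0" and \<mu>: "\<mu> > 0"
    and key: "\<forall>t\<ge>T0. \<bar>y t\<bar> \<ge> \<beta> \<longrightarrow> \<bar>y' t\<bar> \<ge> \<mu>"
  shows "\<exists>T. \<forall>t\<ge>T. \<bar>y t\<bar> < \<beta>"
proof (intro exI[of _ "T0 + 2 * \<bar>B\<bar> / \<mu> + 1"] allI impI)
  fix t assume t: "T0 + 2 * \<bar>B\<bar> / \<mu> + 1 \<le> t"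
  have "2 * \<bar>B\<bar> / \<mu> \<ge> 0" using \<mu> by simp
  then have tT0: "T0 \<le> t" using t by linarith
  show "\<bar>y t\<bar> < \<beta>"
  proof (rule ccontr)
    assume "\<not> \<bar>y t\<bar> < \<beta>"
    then have yt: "\<bar>y t\<bar> \<ge> \<beta>" by simp
    then have y't: "\<bar>y' t\<bar> \<ge> \<mu>" using key tT0 by blast
    show False
    proof (cases "y t \<ge> \<beta>")
      case True
      show False
      proof (cases "y' t > 0")
        case True
        then show False using escape_fwd[OF d yc bnd T0 \<beta> \<mu> key tT0 \<open>y t \<ge> \<beta>\<close>] by simp
      next
        case False
        then have "y' t < 0" using y't \<mu> by linarith
        then show False using escape_bwd[OF d yc bnd T0 \<beta> \<mu> key t \<open>y t \<ge> \<beta>\<close>] by simp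
      qed
    next
      case False
      then have ny: "- y t \<ge> \<beta>" using yt by linarith
      have d': "\<forall>t\<ge>0. ((\<lambda>t. - y t) has_real_derivative - y' t) (at t within {0..})"
        using d by (auto intro: DERIV_minus)
      have yc': "continuous_on {0..} (\<lambda>t. - y' t)" using yc by (rule continuous_on_minus)
      have bnd': "\<forall>t\<ge>0. \<bar>- y t\<bar> \<le> B" using bnd by simp
      have key': "\<forall>t\<ge>T0. \<bar>- y t\<bar> \<ge> \<beta> \<longrightarrow> \<bar>- y' t\<bar> \<ge> \<mu>" using key by simp
      show False
      proof (cases "- y' t > 0")
        case True
        then show False using escape_fwd[OF d' yc' bnd' T0 \<beta> \<mu> key' tT0 ny] by simp
      next
        case False
        then have "- y' t < 0" using y't \<mu> by linarith
        then show False using escape_bwd[OF d' yc' bnd' T0 \<beta> \<mu> key' t ny] by simp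
      qed
    qed
  qed
qed


lemma lip_cont_on:
  fixes f :: "real \<Rightarrow> real"
  assumes "\<And>s t. s \<in> S \<Longrightarrow> t \<in> S \<Longrightarrow> \<bar>f s - f t\<bar> \<le> C * \<bar>s - t\<bar>"
  shows "continuous_on S f"
  unfolding continuous_on_iff
proof (intro ballI allI impI)
  fix x e assume x: "x \<in> S" and e: "(e::real) > 0"
  show "\<exists>d>0. \<forall>x'\<in>S. dist x' x < d \<longrightarrow> dist (f x') (f x) < e"
  proof (intro exI[of _ "e / (\<bar>C\<bar> + 1)"] conjI ballI impI)
    show "e / (\<bar>C\<bar> + 1) > 0" using e by simp
    fix y assume y: "y \<in> S" and "dist y x < e / (\<bar>C\<bar> + 1)"
    then have "(\<bar>C\<bar> + 1) * \<bar>y - x\<bar> < e" by (simp add: dist_real_def field_simps)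
    moreover have "\<bar>f y - f x\<bar> \<le> (\<bar>C\<bar> + 1) * \<bar>y - x\<bar>"
    proof -
      have "\<bar>f y - f x\<bar> \<le> C * \<bar>y - x\<bar>" using assms x y by blast
      also have "\<dots> \<le> (\<bar>C\<bar> + 1) * \<bar>y - x\<bar>" by (rule mult_right_mono) auto
      finally show ?thesis .
    qed
    ultimately show "dist (f y) (f x) < e" by (simp add: dist_real_def)
  qed
qed

lemma sq_bound: "(y::real)\<^sup>2 \<le> R \<Longrightarrow> \<bar>y\<bar> \<le> R + 1"
proof (cases "\<bar>y\<bar> \<le> 1")
  case True
  assume "y\<^sup>2 \<le> R"
  moreover have "y\<^sup>2 \<ge> 0" by simp
  ultimately show ?thesis using True by linarith
next
  case False
  assume h: "y\<^sup>2 \<le> R"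
  have "\<bar>y\<bar> * 1 \<le> \<bar>y\<bar> * \<bar>y\<bar>" using False by (intro mult_left_mono) auto
  also have "\<dots> = y\<^sup>2" by (simp add: power2_eq_square abs_mult_self_eq)
  finally show ?thesis using h by linarith
qed

locale traj =
  fixes \<omega> ub ul k1 k2 :: real and y1 y2 :: "real \<Rightarrow> real"
  assumes \<omega>: "\<omega> > 0" and ub: "ub > 0" and ul: "ul > 0" and k1: "k1 > -1"
    and d1: "\<forall>t\<ge>0. (y1 has_real_derivative \<omega> * y2 t) (at t within {0..})"
    and d2: "\<forall>t\<ge>0. (y2 has_real_derivative (- \<omega> * y1 t - \<omega> * sat ub ul (k1 * y1 t + k2 * y2 t))) (at t within {0..})"
begin

definition W where "W t = (y2 t)\<^sup>2 / 2 + Phi ub ul k1 (y1 t)"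
definition W' where "W' t = \<omega> * y2 t * (sat ub ul (k1 * y1 t) - sat ub ul (k1 * y1 t + k2 * y2 t))"
definition cc where "cc = min 1 (1 + k1)"

lemma cc: "cc > 0" "cc \<le> 1" using k1 by (auto simp: cc_def)

lemma W_deriv: "\<forall>t\<ge>0. (W has_real_derivative W' t) (at t within {0..})"
proof (intro allI impI)
  fix t :: real assume t: "t \<ge> 0"
  have a: "((\<lambda>t. Phi ub ul k1 (y1 t)) has_real_derivative gfun ub ul k1 (y1 t) * (\<omega> * y2 t)) (at t within {0..})"
    by (rule DERIV_chain2[OF Phi_deriv[OF ub ul]]) (use d1 t in auto)
  have b: "((\<lambda>t. (y2 t)\<^sup>2 / 2) has_real_derivative
      (2 * y2 t * (- \<omega> * y1 t - \<omega> * sat ub ul (k1 * y1 t + k2 * y2 t))) / 2) (at t within {0..})"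
  proof -
    have "((\<lambda>t. (y2 t)\<^sup>2) has_real_derivative
      2 * y2 t * (- \<omega> * y1 t - \<omega> * sat ub ul (k1 * y1 t + k2 * y2 t))) (at t within {0..})"
      using DERIV_power[OF d2[rule_format, OF t], of 2] by (simp add: mult_ac)
    then show ?thesis by (intro DERIV_cdivide) simp
  qed
  have "(W has_real_derivative
      (2 * y2 t * (- \<omega> * y1 t - \<omega> * sat ub ul (k1 * y1 t + k2 * y2 t))) / 2
      + gfun ub ul k1 (y1 t) * (\<omega> * y2 t)) (at t within {0..})"
    unfolding W_def[abs_def] by (rule DERIV_add[OF b a])
  moreover have "(2 * y2 t * (- \<omega> * y1 t - \<omega> * sat ub ul (k1 * y1 t + k2 * y2 t))) / 2
      + gfun ub ul k1 (y1 t) * (\<omega> * y2 t) = W' t"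
    unfolding W'_def gfun_def by (simp add: field_simps)
  ultimately show "(W has_real_derivative W' t) (at t within {0..})" by simp
qed

lemma W_lower: "W t \<ge> cc / 2 * ((y1 t)\<^sup>2 + (y2 t)\<^sup>2)"
proof -
  have "Phi ub ul k1 (y1 t) \<ge> cc * (y1 t)\<^sup>2 / 2" using Phi_lower[OF ub ul k1] by (simp add: cc_def)
  moreover have "cc / 2 * (y2 t)\<^sup>2 \<le> (y2 t)\<^sup>2 / 2" using cc mult_right_mono[of cc 1 "(y2 t)\<^sup>2"] by simp
  ultimately show ?thesis unfolding W_def by (simp add: algebra_simps)
qed

lemma W_upper: "W t \<le> (1 + \<bar>k1\<bar>) / 2 * ((y1 t)\<^sup>2 + (y2 t)\<^sup>2)"
proof -
  have "Phi ub ul k1 (y1 t) \<le> (1 + \<bar>k1\<bar>) * (y1 t)\<^sup>2 / 2" using Phi_upper[OF ub ul] by simp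
  moreover have "\<bar>k1\<bar> * (y2 t)\<^sup>2 \<ge> 0" by simp
  moreover have "(1 + \<bar>k1\<bar>) / 2 * ((y1 t)\<^sup>2 + (y2 t)\<^sup>2) = (1 + \<bar>k1\<bar>) * (y1 t)\<^sup>2 / 2 + (y2 t)\<^sup>2 / 2 + \<bar>k1\<bar> * (y2 t)\<^sup>2 / 2"
    by (simp add: field_simps)
  ultimately show ?thesis unfolding W_def by linarith
qed

lemma W'_sign:
  "W' t = \<omega> * (y2 t * (sat ub ul (k1 * y1 t) - sat ub ul (k1 * y1 t + k2 * y2 t)))"
  unfolding W'_def by (simp add: mult.assoc)

lemma W'_nonpos: "k2 \<ge> 0 \<Longrightarrow> W' t \<le> 0"
proof -
  assume k2: "k2 \<ge> 0"
  have "y2 t * (sat ub ul (k1 * y1 t) - sat ub ul (k1 * y1 t + k2 * y2 t)) \<le> 0"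
  proof (cases "y2 t \<ge> 0")
    case True
    then have "k2 * y2 t \<ge> 0" using k2 by simp
    then have "sat ub ul (k1 * y1 t) \<le> sat ub ul (k1 * y1 t + k2 * y2 t)"
      by (intro sat_mono) simp
    then show ?thesis using True by (intro mult_nonneg_nonpos) auto
  next
    case False
    then have "k2 * y2 t \<le> 0" using k2 by (simp add: mult_nonneg_nonpos)
    then have "sat ub ul (k1 * y1 t) \<ge> sat ub ul (k1 * y1 t + k2 * y2 t)"
      by (intro sat_mono) simp
    then show ?thesis using False by (intro mult_nonpos_nonneg) auto
  qed
  then show ?thesis unfolding W'_sign using \<omega> by (simp add: mult_nonneg_nonpos)
qed

lemma W'_nonneg: "k2 \<le> 0 \<Longrightarrow> W' t \<ge> 0"
proof -
  assume k2: "k2 \<le> 0"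
  have "y2 t * (sat ub ul (k1 * y1 t) - sat ub ul (k1 * y1 t + k2 * y2 t)) \<ge> 0"
  proof (cases "y2 t \<ge> 0")
    case True
    then have "k2 * y2 t \<le> 0" using k2 by (simp add: mult_nonpos_nonneg)
    then have "sat ub ul (k1 * y1 t) \<ge> sat ub ul (k1 * y1 t + k2 * y2 t)"
      by (intro sat_mono) simp
    then show ?thesis using True by (intro mult_nonneg_nonneg) auto
  next
    case False
    then have "k2 * y2 t \<ge> 0" using k2 by (simp add: mult_nonpos_nonpos)
    then have "sat ub ul (k1 * y1 t) \<le> sat ub ul (k1 * y1 t + k2 * y2 t)"
      by (intro sat_mono) simp
    then show ?thesis using False by (intro mult_nonpos_nonpos) auto
  qed
  then show ?thesis unfolding W'_sign using \<omega> by simp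
qed

lemma W_antimono: "k2 \<ge> 0 \<Longrightarrow> 0 \<le> s \<Longrightarrow> s \<le> t \<Longrightarrow> W t \<le> W s"
proof -
  assume h: "k2 \<ge> 0" "0 \<le> s" "s \<le> t"
  obtain z where "W t - W s = (t - s) * W' z" using mvt_within_le[OF W_deriv h(2,3)] by blast
  moreover have "(t - s) * W' z \<le> 0" using W'_nonpos[OF h(1)] h by (simp add: mult_nonneg_nonpos)
  ultimately show ?thesis by linarith
qed

lemma W_mono: "k2 \<le> 0 \<Longrightarrow> 0 \<le> s \<Longrightarrow> s \<le> t \<Longrightarrow> W s \<le> W t"
proof -
  assume h: "k2 \<le> 0" "0 \<le> s" "s \<le> t"
  obtain z where "W t - W s = (t - s) * W' z" using mvt_within_le[OF W_deriv h(2,3)] by blast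
  moreover have "(t - s) * W' z \<ge> 0" using W'_nonneg[OF h(1)] h by simp
  ultimately show ?thesis by linarith
qed

lemma stab_bound:
  assumes "k2 \<ge> 0" "t \<ge> 0"
  shows "(y1 t)\<^sup>2 + (y2 t)\<^sup>2 \<le> (1 + \<bar>k1\<bar>) / cc * ((y1 0)\<^sup>2 + (y2 0)\<^sup>2)"
proof -
  have "cc / 2 * ((y1 t)\<^sup>2 + (y2 t)\<^sup>2) \<le> W t" by (rule W_lower)
  also have "\<dots> \<le> W 0" using W_antimono assms by simp
  also have "\<dots> \<le> (1 + \<bar>k1\<bar>) / 2 * ((y1 0)\<^sup>2 + (y2 0)\<^sup>2)" by (rule W_upper)
  finally show ?thesis using cc by (simp add: field_simps)
qed

end


lemma sat_sep:
  assumes "ub > 0" "ul > 0" "\<bar>a\<bar> \<le> min ub ul / 2"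
  shows "\<bar>sat ub ul b - sat ub ul a\<bar> \<ge> min \<bar>b - a\<bar> (min ub ul / 2)"
proof -
  have "min ub ul \<le> ub" "min ub ul \<le> ul" by simp_all
  then have "- ul \<le> a" "a \<le> ub" using assms(3) abs_le_iff[of a] assms(1,2) by linarith+
  then have sa: "sat ub ul a = a" unfolding sat_def by simp
  consider "b > ub" | "b < - ul" | "- ul \<le> b \<and> b \<le> ub" by linarith
  then show ?thesis
  proof cases
    case 1
    then have "sat ub ul b = ub" using assms unfolding sat_def by (auto simp: min_def max_def)
    moreover have "ub - a \<ge> min ub ul / 2" using \<open>a \<le> ub\<close> assms(3) abs_le_iff[of a] \<open>min ub ul \<le> ub\<close> by linarith
    moreover have "min \<bar>b - a\<bar> (min ub ul / 2) \<le> min ub ul / 2" by (rule min.cobounded2)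
    ultimately show ?thesis using sa by linarith
  next
    case 2
    then have "sat ub ul b = - ul" using assms unfolding sat_def by (auto simp: min_def max_def)
    moreover have "a + ul \<ge> min ub ul / 2" using assms(3) abs_le_iff[of a] \<open>min ub ul \<le> ul\<close> by linarith
    moreover have "min \<bar>b - a\<bar> (min ub ul / 2) \<le> min ub ul / 2" by (rule min.cobounded2)
    ultimately show ?thesis using sa by linarith
  next
    case 3
    then have "sat ub ul b = b" using assms unfolding sat_def by (auto simp: min_def max_def)
    then show ?thesis using sa by simp
  qed
qed

lemma g_abs_lower:
  assumes "ub > 0" "ul > 0" "k1 > -1"
  shows "\<bar>gfun ub ul k1 s\<bar> \<ge> min 1 (1 + k1) * \<bar>s\<bar>"
proof (cases "s \<ge> 0")
  case True
  then have "gfun ub ul k1 s \<ge> min 1 (1 + k1) * s" by (rule g_lower_pos[OF assms])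
  moreover have "min 1 (1 + k1) * s \<ge> 0" using True assms by simp
  ultimately show ?thesis using True by simp
next
  case False
  then have "gfun ub ul k1 s \<le> min 1 (1 + k1) * s" by (intro g_lower_neg[OF assms]) simp
  moreover have "min 1 (1 + k1) * s \<le> 0" using False assms by (simp add: mult_nonneg_nonpos)
  ultimately show ?thesis using False by simp
qed

definition zrho :: "real \<Rightarrow> real \<Rightarrow> real \<Rightarrow> real" where
  "zrho ub ul k1 = min ub ul / (2 * (\<bar>k1\<bar> + 1))"

definition zeta :: "real \<Rightarrow> real \<Rightarrow> real \<Rightarrow> real \<Rightarrow> real \<Rightarrow> real" where
  "zeta ub ul k1 k2 \<beta> = min (k2 * \<beta>) (min (min ub ul / 2) (min 1 (1 + k1) * zrho ub ul k1 / 2))"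

lemma zeta_pos: "ub > 0 \<Longrightarrow> ul > 0 \<Longrightarrow> k1 > -1 \<Longrightarrow> k2 > 0 \<Longrightarrow> \<beta> > 0 \<Longrightarrow> zeta ub ul k1 k2 \<beta> > 0"
  unfolding zeta_def zrho_def by (auto simp: min_def)

lemma zrho_pos: "ub > 0 \<Longrightarrow> ul > 0 \<Longrightarrow> zrho ub ul k1 > 0"
  unfolding zrho_def by (auto simp: min_def)

lemma zone:
  assumes ub: "ub > 0" and ul: "ul > 0" and k1: "k1 > -1" and k2: "k2 > 0" and \<beta>: "\<beta> > 0"
    and x2: "\<bar>x2\<bar> \<ge> \<beta>"
    and d: "\<bar>sat ub ul (k1 * x1 + k2 * x2) - sat ub ul (k1 * x1)\<bar> < zeta ub ul k1 k2 \<beta>"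
  shows "\<bar>x1 + sat ub ul (k1 * x1 + k2 * x2)\<bar> \<ge> min 1 (1 + k1) * zrho ub ul k1 / 2"
proof -
  define m where "m = min ub ul"
  define cc where "cc = min 1 (1 + k1)"
  define \<rho> where "\<rho> = zrho ub ul k1"
  have cc: "cc > 0" using k1 by (simp add: cc_def)
  have m: "m > 0" using ub ul by (simp add: m_def)
  have big: "\<bar>k1 * x1\<bar> > m / 2"
  proof (rule ccontr)
    assume "\<not> \<bar>k1 * x1\<bar> > m / 2"
    then have "\<bar>k1 * x1\<bar> \<le> min ub ul / 2" unfolding m_def by linarith
    then have "\<bar>sat ub ul (k1 * x1 + k2 * x2) - sat ub ul (k1 * x1)\<bar> \<ge> min \<bar>k1 * x1 + k2 * x2 - k1 * x1\<bar> (min ub ul / 2)"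
      by (rule sat_sep[OF ub ul])
    moreover have "\<bar>k1 * x1 + k2 * x2 - k1 * x1\<bar> \<ge> k2 * \<beta>"
      using x2 k2 by (simp add: abs_mult mult_left_mono)
    moreover have "zeta ub ul k1 k2 \<beta> \<le> min \<bar>k1 * x1 + k2 * x2 - k1 * x1\<bar> (min ub ul / 2)"
    proof -
      have z1: "zeta ub ul k1 k2 \<beta> \<le> k2 * \<beta>" unfolding zeta_def by (rule min.cobounded1)
      have "zeta ub ul k1 k2 \<beta> \<le> min ub ul / 2" unfolding zeta_def
        by (meson min.cobounded1 min.cobounded2 order_trans)
      then show ?thesis using z1 \<open>\<bar>k1 * x1 + k2 * x2 - k1 * x1\<bar> \<ge> k2 * \<beta>\<close> by simp
    qed
    ultimately have "\<bar>sat ub ul (k1 * x1 + k2 * x2) - sat ub ul (k1 * x1)\<bar> \<ge> zeta ub ul k1 k2 \<beta>"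
      by linarith
    then show False using d by simp
  qed
  have rx: "\<bar>x1\<bar> > \<rho>"
  proof -
    have "(\<bar>k1\<bar> + 1) * \<bar>x1\<bar> \<ge> \<bar>k1 * x1\<bar>" by (simp add: abs_mult algebra_simps)
    then have "(\<bar>k1\<bar> + 1) * \<bar>x1\<bar> > m / 2" using big by linarith
    then show ?thesis unfolding \<rho>_def zrho_def m_def[symmetric]
      by (simp add: field_simps)
  qed
  have "\<bar>gfun ub ul k1 x1\<bar> \<ge> cc * \<bar>x1\<bar>" unfolding cc_def by (rule g_abs_lower[OF ub ul k1])
  moreover have "cc * \<bar>x1\<bar> \<ge> cc * \<rho>" using rx cc by simp
  moreover have "zeta ub ul k1 k2 \<beta> \<le> cc * \<rho> / 2" unfolding zeta_def cc_def \<rho>_def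
    by (meson min.cobounded2 order_trans)
  moreover have "x1 + sat ub ul (k1 * x1 + k2 * x2) = gfun ub ul k1 x1 + (sat ub ul (k1 * x1 + k2 * x2) - sat ub ul (k1 * x1))"
    unfolding gfun_def by simp
  ultimately show ?thesis using d unfolding cc_def[symmetric] \<rho>_def[symmetric] by linarith
qed


lemma lip_from_deriv:
  fixes h h' :: "real \<Rightarrow> real"
  assumes d: "\<forall>t\<ge>0. (h has_real_derivative h' t) (at t within {0..})"
    and b: "\<And>t. t \<ge> 0 \<Longrightarrow> \<bar>h' t\<bar> \<le> K"
    and s: "0 \<le> s" and t: "0 \<le> t"
  shows "\<bar>h s - h t\<bar> \<le> K * \<bar>s - t\<bar>"
proof -
  have *: "\<bar>h b - h a\<bar> \<le> K * \<bar>b - a\<bar>" if ab: "0 \<le> a" "a \<le> b" for a b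
  proof -
    obtain z where z: "a \<le> z" "z \<le> b" "h b - h a = (b - a) * h' z"
      using mvt_within_le[OF d ab] by blast
    have "\<bar>h b - h a\<bar> = \<bar>b - a\<bar> * \<bar>h' z\<bar>" using z by (simp add: abs_mult)
    also have "\<dots> \<le> \<bar>b - a\<bar> * K" using b[of z] z ab by (intro mult_left_mono) auto
    finally show ?thesis by (simp add: mult.commute)
  qed
  show ?thesis
  proof (cases "s \<le> t")
    case True then show ?thesis using *[OF s True] by (simp add: abs_minus_commute)
  next
    case False then show ?thesis using *[OF t] by simp
  qed
qed

locale traj_pos = traj +
  assumes k2: "k2 > 0"
begin

definition B where "B = 2 * W 0 / cc + 1"
definition L0 where "L0 = \<omega> * (2 * B + max ub ul)"
definition y2d where "y2d t = - \<omega> * y1 t - \<omega> * sat ub ul (k1 * y1 t + k2 * y2 t)"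

lemma W_nonneg: "W t \<ge> 0"
proof -
  have "cc / 2 * ((y1 t)\<^sup>2 + (y2 t)\<^sup>2) \<ge> 0" using cc by simp
  then show ?thesis using W_lower[of t] by linarith
qed

lemma bnd: assumes "t \<ge> 0" shows "\<bar>y1 t\<bar> \<le> B" "\<bar>y2 t\<bar> \<le> B"
proof -
  have "cc / 2 * ((y1 t)\<^sup>2 + (y2 t)\<^sup>2) \<le> W 0"
    using W_lower[of t] W_antimono[of 0 t] k2 assms by simp
  then have "(y1 t)\<^sup>2 + (y2 t)\<^sup>2 \<le> 2 * W 0 / cc" using cc by (simp add: field_simps)
  then have "(y1 t)\<^sup>2 \<le> 2 * W 0 / cc" "(y2 t)\<^sup>2 \<le> 2 * W 0 / cc"
    using zero_le_power2[of "y1 t"] zero_le_power2[of "y2 t"] by linarith+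
  then show "\<bar>y1 t\<bar> \<le> B" "\<bar>y2 t\<bar> \<le> B" unfolding B_def by (auto intro: sq_bound)
qed

lemma B_pos: "B \<ge> 1"
  using W_nonneg[of 0] cc unfolding B_def by simp

lemma L0_pos: "L0 \<ge> 0"
  using B_pos \<omega> ub ul unfolding L0_def by (simp add: max_def)

lemma lip1: "0 \<le> s \<Longrightarrow> 0 \<le> t \<Longrightarrow> \<bar>y1 s - y1 t\<bar> \<le> L0 * \<bar>s - t\<bar>"
proof (rule lip_from_deriv[OF d1])
  fix t :: real assume "t \<ge> 0"
  then have "\<bar>\<omega> * y2 t\<bar> \<le> \<omega> * B" using bnd \<omega> by (simp add: abs_mult)
  also have "\<dots> \<le> L0" unfolding L0_def using \<omega> B_pos ub ul
    by (intro mult_left_mono) (auto simp: max_def)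
  finally show "\<bar>\<omega> * y2 t\<bar> \<le> L0" .
qed

lemma y2d_bound: "t \<ge> 0 \<Longrightarrow> \<bar>y2d t\<bar> \<le> L0"
proof -
  assume t: "t \<ge> 0"
  have "\<bar>y2d t\<bar> \<le> \<omega> * \<bar>y1 t\<bar> + \<omega> * \<bar>sat ub ul (k1 * y1 t + k2 * y2 t)\<bar>"
  proof -
    have "\<bar>y2d t\<bar> \<le> \<bar>- \<omega> * y1 t\<bar> + \<bar>\<omega> * sat ub ul (k1 * y1 t + k2 * y2 t)\<bar>"
      unfolding y2d_def by (rule abs_triangle_ineq4)
    then show ?thesis using \<omega> by (simp add: abs_mult)
  qed
  also have "\<dots> \<le> \<omega> * B + \<omega> * max ub ul"
    using bnd[OF t] sat_bound[OF ub ul] \<omega> by (intro add_mono mult_left_mono) auto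
  also have "\<dots> \<le> L0" unfolding L0_def using \<omega> B_pos by (simp add: algebra_simps)
  finally show ?thesis .
qed

lemma d2': "\<forall>t\<ge>0. (y2 has_real_derivative y2d t) (at t within {0..})"
  using d2 unfolding y2d_def by simp

lemma lip2: "0 \<le> s \<Longrightarrow> 0 \<le> t \<Longrightarrow> \<bar>y2 s - y2 t\<bar> \<le> L0 * \<bar>s - t\<bar>"
  by (rule lip_from_deriv[OF d2' y2d_bound])

definition Dl where "Dl t = sat ub ul (k1 * y1 t) - sat ub ul (k1 * y1 t + k2 * y2 t)"

lemma W'_Dl: "W' t = \<omega> * (y2 t * Dl t)"
  unfolding W'_sign Dl_def ..

lemma Dl_bound: "t \<ge> 0 \<Longrightarrow> \<bar>Dl t\<bar> \<le> k2 * B"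
proof -
  assume t: "t \<ge> 0"
  have "\<bar>Dl t\<bar> \<le> \<bar>k1 * y1 t - (k1 * y1 t + k2 * y2 t)\<bar>" unfolding Dl_def by (rule sat_lip)
  also have "\<dots> = k2 * \<bar>y2 t\<bar>" using k2 by (simp add: abs_mult)
  also have "\<dots> \<le> k2 * B" using bnd[OF t] k2 by simp
  finally show ?thesis .
qed

lemma arg_lip:
  assumes "0 \<le> s" "0 \<le> t"
  shows "\<bar>(k1 * y1 s + k2 * y2 s) - (k1 * y1 t + k2 * y2 t)\<bar> \<le> (\<bar>k1\<bar> + k2) * L0 * \<bar>s - t\<bar>"
proof -
  have "\<bar>(k1 * y1 s + k2 * y2 s) - (k1 * y1 t + k2 * y2 t)\<bar> = \<bar>k1 * (y1 s - y1 t) + k2 * (y2 s - y2 t)\<bar>"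
    by (simp add: algebra_simps)
  also have "\<dots> \<le> \<bar>k1\<bar> * \<bar>y1 s - y1 t\<bar> + k2 * \<bar>y2 s - y2 t\<bar>"
    using k2 by (metis abs_mult abs_of_pos abs_triangle_ineq)
  also have "\<dots> \<le> \<bar>k1\<bar> * (L0 * \<bar>s - t\<bar>) + k2 * (L0 * \<bar>s - t\<bar>)"
    using lip1[OF assms] lip2[OF assms] k2 by (intro add_mono mult_left_mono) auto
  finally show ?thesis by (simp add: algebra_simps)
qed

lemma Dl_lip:
  assumes "0 \<le> s" "0 \<le> t"
  shows "\<bar>Dl s - Dl t\<bar> \<le> (2 * \<bar>k1\<bar> + k2) * L0 * \<bar>s - t\<bar>"
proof -
  have "\<bar>Dl s - Dl t\<bar> \<le> \<bar>sat ub ul (k1 * y1 s) - sat ub ul (k1 * y1 t)\<bar>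
      + \<bar>sat ub ul (k1 * y1 s + k2 * y2 s) - sat ub ul (k1 * y1 t + k2 * y2 t)\<bar>"
    unfolding Dl_def by linarith
  also have "\<dots> \<le> \<bar>k1 * y1 s - k1 * y1 t\<bar> + \<bar>(k1 * y1 s + k2 * y2 s) - (k1 * y1 t + k2 * y2 t)\<bar>"
    by (intro add_mono sat_lip)
  also have "\<dots> \<le> \<bar>k1\<bar> * (L0 * \<bar>s - t\<bar>) + (\<bar>k1\<bar> + k2) * L0 * \<bar>s - t\<bar>"
  proof (intro add_mono arg_lip[OF assms])
    have "\<bar>k1 * y1 s - k1 * y1 t\<bar> = \<bar>k1\<bar> * \<bar>y1 s - y1 t\<bar>" by (simp add: abs_mult flip: right_diff_distrib)
    also have "\<dots> \<le> \<bar>k1\<bar> * (L0 * \<bar>s - t\<bar>)" using lip1[OF assms] by (intro mult_left_mono) auto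
    finally show "\<bar>k1 * y1 s - k1 * y1 t\<bar> \<le> \<bar>k1\<bar> * (L0 * \<bar>s - t\<bar>)" .
  qed
  finally show ?thesis by (simp add: algebra_simps)
qed

definition CW where "CW = \<omega> * (L0 * (k2 * B) + B * ((2 * \<bar>k1\<bar> + k2) * L0))"

lemma CW_pos: "CW \<ge> 0"
  unfolding CW_def using \<omega> L0_pos B_pos k2 by simp

lemma W'_lip:
  assumes s: "0 \<le> s" and t: "0 \<le> t"
  shows "\<bar>W' s - W' t\<bar> \<le> CW * \<bar>s - t\<bar>"
proof -
  have "y2 s * Dl s - y2 t * Dl t = (y2 s - y2 t) * Dl s + y2 t * (Dl s - Dl t)"
    by (simp add: algebra_simps)
  then have "\<bar>y2 s * Dl s - y2 t * Dl t\<bar> \<le> \<bar>y2 s - y2 t\<bar> * \<bar>Dl s\<bar> + \<bar>y2 t\<bar> * \<bar>Dl s - Dl t\<bar>"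
    by (metis abs_mult abs_triangle_ineq)
  also have "\<dots> \<le> (L0 * \<bar>s - t\<bar>) * (k2 * B) + B * ((2 * \<bar>k1\<bar> + k2) * L0 * \<bar>s - t\<bar>)"
  proof (intro add_mono mult_mono)
    show "\<bar>y2 s - y2 t\<bar> \<le> L0 * \<bar>s - t\<bar>" by (rule lip2[OF s t])
    show "\<bar>Dl s\<bar> \<le> k2 * B" by (rule Dl_bound[OF s])
    show "\<bar>y2 t\<bar> \<le> B" by (rule bnd[OF t])
    show "\<bar>Dl s - Dl t\<bar> \<le> (2 * \<bar>k1\<bar> + k2) * L0 * \<bar>s - t\<bar>" by (rule Dl_lip[OF s t])
    show "0 \<le> L0 * \<bar>s - t\<bar>" using L0_pos by simp
    show "0 \<le> B" using B_pos by simp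
  qed auto
  finally have "\<omega> * \<bar>y2 s * Dl s - y2 t * Dl t\<bar> \<le> \<omega> * ((L0 * \<bar>s - t\<bar>) * (k2 * B) + B * ((2 * \<bar>k1\<bar> + k2) * L0 * \<bar>s - t\<bar>))"
    using \<omega> by (intro mult_left_mono) auto
  moreover have "\<bar>W' s - W' t\<bar> = \<omega> * \<bar>y2 s * Dl s - y2 t * Dl t\<bar>"
    unfolding W'_Dl using \<omega> by (simp add: abs_mult flip: right_diff_distrib)
  moreover have "\<omega> * ((L0 * \<bar>s - t\<bar>) * (k2 * B) + B * ((2 * \<bar>k1\<bar> + k2) * L0 * \<bar>s - t\<bar>)) = CW * \<bar>s - t\<bar>"
    unfolding CW_def by (simp add: algebra_simps)
  ultimately show ?thesis by simp
qed

lemma y2d_lip: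
  assumes s: "0 \<le> s" and t: "0 \<le> t"
  shows "\<bar>y2d s - y2d t\<bar> \<le> \<omega> * (1 + \<bar>k1\<bar> + k2) * L0 * \<bar>s - t\<bar>"
proof -
  have "y2d s - y2d t = - \<omega> * (y1 s - y1 t) - \<omega> * (sat ub ul (k1 * y1 s + k2 * y2 s) - sat ub ul (k1 * y1 t + k2 * y2 t))"
    unfolding y2d_def by (simp add: algebra_simps)
  then have "\<bar>y2d s - y2d t\<bar> \<le> \<omega> * \<bar>y1 s - y1 t\<bar> + \<omega> * \<bar>sat ub ul (k1 * y1 s + k2 * y2 s) - sat ub ul (k1 * y1 t + k2 * y2 t)\<bar>"
    using \<omega> by (simp add: abs_mult) (metis abs_mult abs_of_pos abs_triangle_ineq4 abs_minus_cancel)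
  also have "\<dots> \<le> \<omega> * (L0 * \<bar>s - t\<bar>) + \<omega> * ((\<bar>k1\<bar> + k2) * L0 * \<bar>s - t\<bar>)"
    using lip1[OF s t] order_trans[OF sat_lip arg_lip[OF s t]] \<omega> by (intro add_mono mult_left_mono) auto
  finally show ?thesis by (simp add: algebra_simps)
qed

lemma W_cauchy: "e > 0 \<Longrightarrow> \<exists>T. \<forall>s\<ge>T. \<forall>t\<ge>T. \<bar>W s - W t\<bar> < e"
proof -
  assume e: "e > 0"
  define Wl where "Wl = Inf (W ` {0..})"
  have bdd: "bdd_below (W ` {0..})" using W_nonneg by (intro bdd_belowI2[of _ 0]) auto
  have ne: "W ` {0..} \<noteq> {}" by auto
  have "\<exists>x\<in>W ` {0..}. x < Wl + e"
    using cInf_less_iff[OF ne bdd, of "Wl + e"] e unfolding Wl_def by simp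
  then obtain T where T: "T \<ge> 0" "W T < Wl + e" by auto
  have low: "Wl \<le> W s" if "s \<ge> 0" for s
    unfolding Wl_def using that bdd by (auto intro: cInf_lower)
  show ?thesis
  proof (intro exI[of _ T] allI impI)
    fix s t assume "T \<le> s" "T \<le> t"
    then have "W s \<le> W T" "W t \<le> W T" using W_antimono k2 T by auto
    moreover have "Wl \<le> W s" "Wl \<le> W t" using low \<open>T \<le> s\<close> \<open>T \<le> t\<close> T by auto
    ultimately show "\<bar>W s - W t\<bar> < e" using T by linarith
  qed
qed

lemma W'_small: "e > 0 \<Longrightarrow> \<exists>T. \<forall>t\<ge>T. \<bar>W' t\<bar> < e"
  by (rule barbalat[OF W_deriv W'_lip CW_pos W_cauchy])

lemma y2d_alt: "y2d t = - (\<omega> * (y1 t + sat ub ul (k1 * y1 t + k2 * y2 t)))"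
  unfolding y2d_def by (simp add: algebra_simps)

lemma y2d_cont: "continuous_on {0..} y2d"
  by (rule lip_cont_on[where C = "\<omega> * (1 + \<bar>k1\<bar> + k2) * L0"]) (use y2d_lip in auto)

lemma y2_small: "\<beta> > 0 \<Longrightarrow> \<exists>T. \<forall>t\<ge>T. \<bar>y2 t\<bar> < \<beta>"
proof -
  assume \<beta>: "\<beta> > 0"
  define \<eta> where "\<eta> = zeta ub ul k1 k2 \<beta>"
  have \<eta>: "\<eta> > 0" unfolding \<eta>_def by (rule zeta_pos[OF ub ul k1 k2 \<beta>])
  define \<mu> where "\<mu> = \<omega> * (cc * zrho ub ul k1 / 2)"
  have \<mu>: "\<mu> > 0" unfolding \<mu>_def using \<omega> cc zrho_pos[OF ub ul] by simp
  obtain T1 where T1: "\<forall>t\<ge>T1. \<bar>W' t\<bar> < \<omega> * \<beta> * \<eta>"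
    using W'_small[of "\<omega> * \<beta> * \<eta>"] \<omega> \<beta> \<eta> by auto
  have key: "\<forall>t\<ge>max T1 0. \<bar>y2 t\<bar> \<ge> \<beta> \<longrightarrow> \<bar>y2d t\<bar> \<ge> \<mu>"
  proof (intro allI impI)
    fix t assume t: "max T1 0 \<le> t" and y: "\<bar>y2 t\<bar> \<ge> \<beta>"
    have "\<omega> * (\<bar>y2 t\<bar> * \<bar>Dl t\<bar>) < \<omega> * (\<beta> * \<eta>)"
      using T1 t unfolding W'_Dl using \<omega> by (simp add: abs_mult mult.assoc)
    then have lt: "\<bar>y2 t\<bar> * \<bar>Dl t\<bar> < \<beta> * \<eta>" using \<omega> by simp
    have "\<bar>Dl t\<bar> < \<eta>"
    proof (rule ccontr)
      assume "\<not> \<bar>Dl t\<bar> < \<eta>"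
      then have "\<beta> * \<eta> \<le> \<bar>y2 t\<bar> * \<bar>Dl t\<bar>" using y \<beta> \<eta> by (intro mult_mono) auto
      then show False using lt by simp
    qed
    then have "\<bar>sat ub ul (k1 * y1 t + k2 * y2 t) - sat ub ul (k1 * y1 t)\<bar> < zeta ub ul k1 k2 \<beta>"
      unfolding Dl_def \<eta>_def by (simp add: abs_minus_commute)
    then have "\<bar>y1 t + sat ub ul (k1 * y1 t + k2 * y2 t)\<bar> \<ge> min 1 (1 + k1) * zrho ub ul k1 / 2"
      by (rule zone[OF ub ul k1 k2 \<beta> y])
    moreover have "\<bar>y2d t\<bar> = \<omega> * \<bar>y1 t + sat ub ul (k1 * y1 t + k2 * y2 t)\<bar>"
      using y2d_alt[of t] \<omega> by (simp add: abs_mult)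
    ultimately show "\<bar>y2d t\<bar> \<ge> \<mu>" unfolding \<mu>_def cc_def using \<omega> by simp
  qed
  have bnd': "\<forall>t\<ge>0. \<bar>y2 t\<bar> \<le> B" using bnd by auto
  show ?thesis by (rule escape[OF d2' y2d_cont bnd' _ \<beta> \<mu> key]) simp
qed

lemma y2_cauchy: "e > 0 \<Longrightarrow> \<exists>T. \<forall>s\<ge>T. \<forall>t\<ge>T. \<bar>y2 s - y2 t\<bar> < e"
proof -
  assume e: "e > 0"
  obtain T where T: "\<forall>t\<ge>T. \<bar>y2 t\<bar> < e / 2" using y2_small[of "e / 2"] e by auto
  show ?thesis
  proof (intro exI[of _ T] allI impI)
    fix s t assume "T \<le> s" "T \<le> t"
    then have "\<bar>y2 s\<bar> < e / 2" "\<bar>y2 t\<bar> < e / 2" using T by auto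
    then show "\<bar>y2 s - y2 t\<bar> < e" by linarith
  qed
qed

lemma y2d_small: "e > 0 \<Longrightarrow> \<exists>T. \<forall>t\<ge>T. \<bar>y2d t\<bar> < e"
  by (rule barbalat[OF d2' y2d_lip _ y2_cauchy]) (use \<omega> L0_pos k2 in auto)

lemma y1_small: "e > 0 \<Longrightarrow> \<exists>T. \<forall>t\<ge>T. \<bar>y1 t\<bar> < e"
proof -
  assume e: "e > 0"
  obtain T1 where T1: "\<forall>t\<ge>T1. \<bar>y2d t\<bar> < \<omega> * (cc * e / 2)"
    using y2d_small[of "\<omega> * (cc * e / 2)"] \<omega> cc e by auto
  obtain T2 where T2: "\<forall>t\<ge>T2. \<bar>y2 t\<bar> < cc * e / (2 * (k2 + 1))"
    using y2_small[of "cc * e / (2 * (k2 + 1))"] cc e k2 by auto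
  show ?thesis
  proof (intro exI[of _ "max T1 T2"] allI impI)
    fix t assume t: "max T1 T2 \<le> t"
    have g: "cc * \<bar>y1 t\<bar> \<le> \<bar>gfun ub ul k1 (y1 t)\<bar>" unfolding cc_def by (rule g_abs_lower[OF ub ul k1])
    have "gfun ub ul k1 (y1 t) = (y1 t + sat ub ul (k1 * y1 t + k2 * y2 t)) + Dl t"
      unfolding gfun_def Dl_def by simp
    then have "\<bar>gfun ub ul k1 (y1 t)\<bar> \<le> \<bar>y1 t + sat ub ul (k1 * y1 t + k2 * y2 t)\<bar> + \<bar>Dl t\<bar>"
      by simp
    moreover have "\<omega> * \<bar>y1 t + sat ub ul (k1 * y1 t + k2 * y2 t)\<bar> = \<bar>y2d t\<bar>"
      using y2d_alt[of t] \<omega> by (simp add: abs_mult)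
    moreover have "\<bar>Dl t\<bar> \<le> k2 * \<bar>y2 t\<bar>"
    proof -
      have "\<bar>Dl t\<bar> \<le> \<bar>k1 * y1 t - (k1 * y1 t + k2 * y2 t)\<bar>" unfolding Dl_def by (rule sat_lip)
      then show ?thesis using k2 by (simp add: abs_mult)
    qed
    moreover have "\<bar>y2d t\<bar> < \<omega> * (cc * e / 2)" using T1 t by auto
    moreover have "k2 * \<bar>y2 t\<bar> \<le> k2 * (cc * e / (2 * (k2 + 1)))" using T2 t k2 by (intro mult_left_mono) auto
    moreover have "k2 * (cc * e / (2 * (k2 + 1))) < cc * e / 2"
      using k2 cc e by (simp add: field_simps)
    ultimately have "\<omega> * \<bar>y1 t + sat ub ul (k1 * y1 t + k2 * y2 t)\<bar> < \<omega> * (cc * e / 2)"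
      "\<bar>gfun ub ul k1 (y1 t)\<bar> \<le> \<bar>y1 t + sat ub ul (k1 * y1 t + k2 * y2 t)\<bar> + \<bar>Dl t\<bar>"
      "\<bar>Dl t\<bar> < cc * e / 2" by linarith+
    moreover from this(1) have "\<bar>y1 t + sat ub ul (k1 * y1 t + k2 * y2 t)\<bar> < cc * e / 2"
      using \<omega> by simp
    ultimately have "cc * \<bar>y1 t\<bar> < cc * e" using g by linarith
    then show "\<bar>y1 t\<bar> < e" using cc by simp
  qed
qed

end


lemma sol_traj:
  assumes sol: "is_solution (osc_field \<omega> ub ul k1 k2) x"
    and \<omega>: "\<omega> > 0" and ub: "ub > 0" and ul: "ul > 0" and k1: "k1 > -1"
  shows "traj \<omega> ub ul k1 k2 (\<lambda>t. x t $ 1) (\<lambda>t. x t $ 2)"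
proof
  show "\<omega> > 0" "ub > 0" "ul > 0" "k1 > -1" by fact+
  have c: "((\<lambda>t. x t $ i) has_real_derivative osc_field \<omega> ub ul k1 k2 (x t) $ i) (at t within {0..})"
    if "t \<ge> 0" for t i
  proof -
    have "(x has_vector_derivative osc_field \<omega> ub ul k1 k2 (x t)) (at t within {0..})"
      using sol that unfolding is_solution_def by blast
    then have "((\<lambda>t. x t $ i) has_vector_derivative osc_field \<omega> ub ul k1 k2 (x t) $ i) (at t within {0..})"
      by (rule bounded_linear.has_vector_derivative[OF bounded_linear_vec_nth])
    then show ?thesis by (simp add: has_real_derivative_iff_has_vector_derivative)
  qed
  show "\<forall>t\<ge>0. ((\<lambda>t. x t $ 1) has_real_derivative \<omega> * x t $ 2) (at t within {0..})"
    using c[of _ 1] by (simp add: osc1)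
  show "\<forall>t\<ge>0. ((\<lambda>t. x t $ 2) has_real_derivative - \<omega> * x t $ 1 - \<omega> * sat ub ul (k1 * x t $ 1 + k2 * x t $ 2)) (at t within {0..})"
    using c[of _ 2] by (simp add: osc2)
qed

theorem proposition3:
  fixes \<omega> ubar ulow k1 k2 :: real
  assumes "\<omega> > 0" and "ubar > 0" and "ulow > 0"
  shows "GAS_origin (osc_field \<omega> ubar ulow k1 k2) \<longleftrightarrow> (k1 > -1 \<and> k2 > 0)"
proof
  let ?f = "osc_field \<omega> ubar ulow k1 k2"
  assume gas: "GAS_origin ?f"
  then have attr: "\<And>x. is_solution ?f x \<Longrightarrow> (x \<longlongrightarrow> 0) at_top" unfolding GAS_origin_def by blast
  have k1: "k1 > -1"
  proof (rule ccontr)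
    assume "\<not> k1 > -1"
    then have k1: "k1 \<le> -1" by simp
    define e :: "real^2" where "e = vector [ulow, 0]"
    have "k1 * ulow \<le> - ulow" using k1 assms by (metis mult_le_cancel_right mult_minus_left mult_1 less_le_not_le)
    then have "sat ubar ulow (k1 * ulow) = - ulow" using assms unfolding sat_def by (simp add: max_def min_def)
    then have fe: "?f e = 0" unfolding vec2_eq by (simp add: osc1 osc2 e_def)
    have "is_solution ?f (\<lambda>t. e)" unfolding is_solution_def fe by (auto intro: derivative_eq_intros)
    then have "((\<lambda>t::real. e) \<longlongrightarrow> 0) at_top" by (rule attr)
    then have "e = 0" by (simp add: tendsto_const_iff)
    then show False using assms unfolding e_def vec2_eq by simp
  qed
  have k2: "k2 > 0"
  proof (rule ccontr)
    assume "\<not> k2 > 0"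
    then have k2: "k2 \<le> 0" by simp
    define x0 :: "real^2" where "x0 = vector [1, 0]"
    define x where "x = sol ?f x0"
    have L: "\<And>a b. norm (?f a - ?f b) \<le> (2 * \<omega> * (1 + \<bar>k1\<bar> + \<bar>k2\<bar>)) * norm (a - b)"
      by (rule osc_lip[OF assms(1)])
    have xs: "is_solution ?f x" "x 0 = x0"
    proof -
      have L0: "0 \<le> 2 * \<omega> * (1 + \<bar>k1\<bar> + \<bar>k2\<bar>)" using assms by simp
      show "is_solution ?f x" "x 0 = x0" using existence[OF L L0, of x0] unfolding x_def by auto
    qed
    interpret traj \<omega> ubar ulow k1 k2 "\<lambda>t. x t $ 1" "\<lambda>t. x t $ 2"
      by (rule sol_traj[OF xs(1) assms k1])
    have lim: "(x \<longlongrightarrow> 0) at_top" by (rule attr[OF xs(1)])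
    define r where "r = cc / (2 * (1 + \<bar>k1\<bar>))"
    have r: "r > 0" "r \<le> 1" using cc unfolding r_def by (auto simp: field_simps)
    obtain T where T: "\<forall>t\<ge>T. norm (x t) < r"
      using lim r unfolding tendsto_iff eventually_at_top_linorder by (auto simp: dist_norm)
    define t where "t = max T 0"
    have nt: "norm (x t) < r" using T unfolding t_def by simp
    have "(norm (x t))\<^sup>2 \<le> norm (x t)" using nt r by (simp add: power2_eq_square mult_left_le_one_le)
    then have sq: "(x t $ 1)\<^sup>2 + (x t $ 2)\<^sup>2 < r" using nt norm2_sq[of "x t"] by linarith
    have "W 0 \<le> W t" using W_mono[OF k2] unfolding t_def by simp
    also have "\<dots> \<le> (1 + \<bar>k1\<bar>) / 2 * ((x t $ 1)\<^sup>2 + (x t $ 2)\<^sup>2)" by (rule W_upper)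
    also have "\<dots> \<le> (1 + \<bar>k1\<bar>) / 2 * r" using sq by (intro mult_left_mono) auto
    also have "\<dots> = cc / 4" unfolding r_def by (simp add: field_simps)
    finally have "W 0 \<le> cc / 4" .
    moreover have "W 0 \<ge> cc / 2 * ((x 0 $ 1)\<^sup>2 + (x 0 $ 2)\<^sup>2)" by (rule W_lower)
    moreover have "(x 0 $ 1)\<^sup>2 + (x 0 $ 2)\<^sup>2 = 1" using xs(2) unfolding x0_def by simp
    ultimately show False using cc by simp
  qed
  show "k1 > -1 \<and> k2 > 0" using k1 k2 by simp
next
  let ?f = "osc_field \<omega> ubar ulow k1 k2"
  assume "k1 > -1 \<and> k2 > 0"
  then have k1: "k1 > -1" and k2: "k2 > 0" by auto
  show "GAS_origin ?f"
    unfolding GAS_origin_def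
  proof (intro conjI allI impI)
    show "?f 0 = 0" unfolding vec2_eq using assms by (simp add: osc1 osc2 sat_zero)
  next
    fix \<epsilon> :: real assume \<epsilon>: "\<epsilon> > 0"
    define c0 where "c0 = min 1 (1 + k1)"
    have c0: "c0 > 0" "c0 \<le> 1" using k1 unfolding c0_def by auto
    define \<kappa> where "\<kappa> = (1 + \<bar>k1\<bar>) / c0"
    have \<kappa>: "\<kappa> \<ge> 1" unfolding \<kappa>_def using c0 by (simp add: field_simps)
    show "\<exists>\<delta>>0. \<forall>x. is_solution ?f x \<longrightarrow> norm (x 0) < \<delta> \<longrightarrow> (\<forall>t\<ge>0. norm (x t) < \<epsilon>)"
    proof (intro exI[of _ "\<epsilon> / \<kappa>"] conjI allI impI)
      show "\<epsilon> / \<kappa> > 0" using \<epsilon> \<kappa> by simp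
      fix x and t :: real assume xs: "is_solution ?f x" and x0: "norm (x 0) < \<epsilon> / \<kappa>" and t: "t \<ge> 0"
      interpret traj \<omega> ubar ulow k1 k2 "\<lambda>t. x t $ 1" "\<lambda>t. x t $ 2"
        by (rule sol_traj[OF xs assms k1])
      have "(norm (x t))\<^sup>2 \<le> \<kappa> * (norm (x 0))\<^sup>2"
        using stab_bound[of t, unfolded cc_def] k2 t unfolding norm2_sq \<kappa>_def traj.cc_def c0_def by simp
      also have "\<dots> < \<kappa> * (\<epsilon> / \<kappa>)\<^sup>2"
        using x0 \<kappa> by (intro mult_strict_left_mono power_strict_mono) auto
      also have "\<dots> \<le> \<epsilon>\<^sup>2" using \<kappa> \<epsilon> by (simp add: power2_eq_square field_simps)
      finally show "norm (x t) < \<epsilon>" using \<epsilon> by (simp add: power_less_imp_less_base)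
    qed
  next
    fix x assume xs: "is_solution ?f x"
    interpret traj_pos \<omega> ubar ulow k1 k2 "\<lambda>t. x t $ 1" "\<lambda>t. x t $ 2"
      by (intro traj_pos.intro sol_traj[OF xs assms k1] traj_pos_axioms.intro k2)
    show "(x \<longlongrightarrow> 0) at_top"
      unfolding tendsto_iff eventually_at_top_linorder
    proof (intro allI impI)
      fix e :: real assume e: "e > 0"
      obtain T1 where T1: "\<forall>t\<ge>T1. \<bar>x t $ 1\<bar> < e / 2" using y1_small[of "e / 2"] e by auto
      obtain T2 where T2: "\<forall>t\<ge>T2. \<bar>x t $ 2\<bar> < e / 2" using y2_small[of "e / 2"] e by auto
      show "\<exists>N. \<forall>n\<ge>N. dist (x n) 0 < e"
      proof (intro exI[of _ "max T1 T2"] allI impI)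
        fix n assume "max T1 T2 \<le> n"
        then have "\<bar>x n $ 1\<bar> < e / 2" "\<bar>x n $ 2\<bar> < e / 2" using T1 T2 by auto
        then show "dist (x n) 0 < e" using norm2_le[of "x n"] by simp
      qed
    qed
  qed
qed

end
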